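(* Let $\chi:T\to\overline{\mathbf F}_p^\times$ be a smooth character with $\chi\neq\chi^s$. Then $\mathrm{Hom}_P(\mathrm{Ind}_P^G\chi,\mathrm{Ind}_P^G\chi)=\mathrm{Hom}_G(\mathrm{Ind}_P^G\chi,\mathrm{Ind}_P^G\chi)$.
   Context: $F$ non-Archimedean local field of residual characteristic $p$, $G=\mathrm{GL}_2(F)$, $P$ the upper triangular Borel subgroup, $U$ its unipotent radical, $T$ the diagonal torus; characters of $T$ are viewed as characters of $P$ via $P\to P/U\cong T$. $\chi^s(\mathrm{diag}(a,d))=\chi(\mathrm{diag}(d,a))$. $\mathrm{Ind}_P^G\chi$ is the space of locally constant $f:G\to\overline{\mathbf F}_p$ with $f(bg)=\chi(b)f(g)$ for $b\in P$, with $G$ acting by right translation. *)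

theory Defs
  imports "HOL-Analysis.Analysis" "HOL-Computational_Algebra.Polynomial"
begin

text \<open>F is modelled by a field type 'f together with a (multiplicative) absolute value v.\<close>

definition nonarch_local_field :: "('f::field \<Rightarrow> real) \<Rightarrow> nat \<Rightarrow> bool" where
  "nonarch_local_field v p \<longleftrightarrow>
     v 0 = 0 \<and> (\<forall>x. x \<noteq> 0 \<longrightarrow> v x > 0) \<and>
     (\<forall>x y. v (x * y) = v x * v y) \<and>
     (\<forall>x y. v (x + y) \<le> max (v x) (v y)) \<and>
     (\<exists>\<pi>. 0 < v \<pi> \<and> v \<pi> < 1 \<and> (\<forall>x. x \<noteq> 0 \<longrightarrow> (\<exists>n::int. v x = v \<pi> powi n))) \<and>
     (\<forall>s::nat \<Rightarrow> 'f. (\<forall>e>0. \<exists>N. \<forall>m\<ge>N. \<forall>n\<ge>N. v (s m - s n) < e) \<longrightarrow>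
         (\<exists>l. \<forall>e>0. \<exists>N. \<forall>n\<ge>N. v (s n - l) < e)) \<and>
     (\<exists>R. finite R \<and> R \<subseteq> {x. v x \<le> 1} \<and> (\<forall>x. v x \<le> 1 \<longrightarrow> (\<exists>r\<in>R. v (x - r) < 1))) \<and>
     prime p \<and> v (of_nat p) < 1"

definition alg_closure_of_Fp :: "'k::field itself \<Rightarrow> nat \<Rightarrow> bool" where
  "alg_closure_of_Fp _ p \<longleftrightarrow>
     CHAR('k) = p \<and>
     (\<forall>q::'k poly. degree q > 0 \<longrightarrow> (\<exists>x. poly q x = 0)) \<and>
     (\<forall>x::'k. \<exists>q::'k poly. q \<noteq> 0 \<and> (\<forall>i. coeff q i \<in> range of_nat) \<and> poly q x = 0)"

definition GL2 :: "(('f::field)^2^2) set" where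
  "GL2 = {g. det g \<noteq> 0}"

definition Borel :: "(('f::field)^2^2) set" where
  "Borel = {b. det b \<noteq> 0 \<and> b $ 2 $ 1 = 0}"

definition locally_constant_GL2 :: "('f::field \<Rightarrow> real) \<Rightarrow> ('f^2^2 \<Rightarrow> 'k) \<Rightarrow> bool" where
  "locally_constant_GL2 v f \<longleftrightarrow>
     (\<forall>g\<in>GL2. \<exists>e>0. \<forall>h\<in>GL2. (\<forall>i j. v (h $ i $ j - g $ i $ j) < e) \<longrightarrow> f h = f g)"

text \<open>A character of T is given by chi a d = chi(diag(a,d)); only values on F^x \<times> F^x matter.\<close>
definition smooth_char :: "('f::field \<Rightarrow> real) \<Rightarrow> ('f \<Rightarrow> 'f \<Rightarrow> 'k::field) \<Rightarrow> bool" where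
  "smooth_char v chi \<longleftrightarrow>
     (\<forall>a d. a \<noteq> 0 \<and> d \<noteq> 0 \<longrightarrow> chi a d \<noteq> 0) \<and>
     (\<forall>a d a' d'. a \<noteq> 0 \<and> d \<noteq> 0 \<and> a' \<noteq> 0 \<and> d' \<noteq> 0 \<longrightarrow>
        chi (a * a') (d * d') = chi a d * chi a' d') \<and>
     (\<forall>a d. a \<noteq> 0 \<and> d \<noteq> 0 \<longrightarrow> (\<exists>e>0. \<forall>a' d'. a' \<noteq> 0 \<and> d' \<noteq> 0 \<and>
        v (a' - a) < e \<and> v (d' - d) < e \<longrightarrow> chi a' d' = chi a d))"

definition char_swap :: "('f \<Rightarrow> 'f \<Rightarrow> 'k) \<Rightarrow> ('f \<Rightarrow> 'f \<Rightarrow> 'k)" where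
  "char_swap chi = (\<lambda>a d. chi d a)"

definition char_eq_on_T :: "('f::field \<Rightarrow> 'f \<Rightarrow> 'k) \<Rightarrow> ('f \<Rightarrow> 'f \<Rightarrow> 'k) \<Rightarrow> bool" where
  "char_eq_on_T chi \<psi> \<longleftrightarrow> (\<forall>a d. a \<noteq> 0 \<and> d \<noteq> 0 \<longrightarrow> chi a d = \<psi> a d)"

text \<open>Inflation of chi to P via P \<rightarrow> P/U = T.\<close>
definition char_on_P :: "('f \<Rightarrow> 'f \<Rightarrow> 'k) \<Rightarrow> 'f^2^2 \<Rightarrow> 'k" where
  "char_on_P chi b = chi (b $ 1 $ 1) (b $ 2 $ 2)"

text \<open>Functions GL_2(F) \<rightarrow> k, extended by 0 outside GL_2(F).\<close>
definition Ind :: "('f::field \<Rightarrow> real) \<Rightarrow> ('f \<Rightarrow> 'f \<Rightarrow> 'k::field) \<Rightarrow> (('f^2^2) \<Rightarrow> 'k) set" where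
  "Ind v chi = {f. (\<forall>x. x \<notin> GL2 \<longrightarrow> f x = 0) \<and> locally_constant_GL2 v f \<and>
                  (\<forall>b\<in>Borel. \<forall>g\<in>GL2. f (b ** g) = char_on_P chi b * f g)}"

definition right_translate :: "('f::field)^2^2 \<Rightarrow> ('f^2^2 \<Rightarrow> 'k) \<Rightarrow> ('f^2^2 \<Rightarrow> 'k)" where
  "right_translate h f = (\<lambda>x. f (x ** h))"

definition Hom_equiv :: "(('f::field)^2^2) set \<Rightarrow> (('f^2^2) \<Rightarrow> 'k::field) set \<Rightarrow>
     (('f^2^2 \<Rightarrow> 'k) \<Rightarrow> ('f^2^2 \<Rightarrow> 'k)) set" where
  "Hom_equiv H V = {\<phi>.
      (\<forall>f\<in>V. \<phi> f \<in> V) \<and>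
      (\<forall>f\<in>V. \<forall>f'\<in>V. \<phi> (\<lambda>x. f x + f' x) = (\<lambda>x. \<phi> f x + \<phi> f' x)) \<and>
      (\<forall>c. \<forall>f\<in>V. \<phi> (\<lambda>x. c * f x) = (\<lambda>x. c * \<phi> f x)) \<and>
      (\<forall>h\<in>H. \<forall>f\<in>V. \<phi> (right_translate h f) = right_translate h (\<phi> f))}"

end

theory Submission
  imports Defs
begin


locale LF =
  fixes v :: "'f::field \<Rightarrow> real" and p :: nat and chi :: "'f \<Rightarrow> 'f \<Rightarrow> 'k::field"
  assumes nl: "nonarch_local_field v p"
    and ac: "alg_closure_of_Fp TYPE('k) p"
    and sc: "smooth_char v chi"
    and ns: "\<not> char_eq_on_T chi (char_swap chi)"
begin

lemma v0[simp]: "v 0 = 0" using nl unfolding nonarch_local_field_def by auto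
lemma vpos: "x \<noteq> 0 \<Longrightarrow> v x > 0" using nl unfolding nonarch_local_field_def by auto
lemma vmult: "v (x * y) = v x * v y" using nl unfolding nonarch_local_field_def by auto
lemma vult: "v (x + y) \<le> max (v x) (v y)" using nl unfolding nonarch_local_field_def by auto
lemma vnn[simp]: "v x \<ge> 0" using vpos[of x] by (cases "x = 0") auto
lemma vzero_iff[simp]: "v x = 0 \<longleftrightarrow> x = 0" using vpos[of x] by (cases "x = 0") auto
lemma vpos_iff[simp]: "v x > 0 \<longleftrightarrow> x \<noteq> 0" using vpos[of x] by (cases "x = 0") auto
lemma v1[simp]: "v 1 = 1"
proof -
  have "v 1 = v 1 * v 1" using vmult[of 1 1] by simp
  moreover have "v 1 > 0" by simp
  ultimately show ?thesis by (metis mult_cancel_right1 order_less_irrefl)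
qed
lemma vm1[simp]: "v (-1) = 1"
proof -
  have "v (-1) * v (-1) = 1" using vmult[of "-1" "-1"] by simp
  moreover have "v (-1) \<ge> 0" by simp
  ultimately show ?thesis by (metis mult_cancel_right1 mult_le_cancel_left1 mult_less_cancel_left2 
     not_one_le_zero nle_le not_less_iff_gr_or_eq)
qed
lemma vneg[simp]: "v (- x) = v x" using vmult[of "-1" x] by simp
lemma vsym: "v (x - y) = v (y - x)" by (metis minus_diff_eq vneg)
lemma vinv[simp]: "v (inverse x) = inverse (v x)"
proof (cases "x = 0")
  case False
  then have "v x * v (inverse x) = 1" using vmult[of x "inverse x"] by simp
  then show ?thesis by (metis inverse_unique)
qed simp
lemma vdiv[simp]: "v (x / y) = v x / v y" by (simp add: divide_inverse vmult)
lemma vmult'[simp]: "v (x * y) = v x * v y" by (rule vmult)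
lemma vdiff: "v (x - y) \<le> max (v x) (v y)" using vult[of x "-y"] by simp
lemma vadd_less: "v x < v y \<Longrightarrow> v (x + y) = v y"
proof -
  assume a: "v x < v y"
  have "v (x + y) \<le> v y" using vult[of x y] a by simp
  moreover have "v y \<le> max (v (x + y)) (v x)" using vdiff[of "x + y" x] by simp
  ultimately show ?thesis using a by linarith
qed
lemma vclose: "v (x' - x) < v x \<Longrightarrow> v x' = v x"
  using vadd_less[of "x' - x" x] by simp
lemma vtri: "v (x - z) \<le> max (v (x - y)) (v (y - z))"
  using vult[of "x - y" "y - z"] by simp

lemma lt1_mult: "0 \<le> b \<Longrightarrow> a \<le> 1 \<Longrightarrow> b < 1 \<Longrightarrow> a * b < (1::real)"
  using mult_right_mono[of a 1 b] by linarith
lemma lt1_mult': "0 \<le> b \<Longrightarrow> a \<le> 1 \<Longrightarrow> b < 1 \<Longrightarrow> b * a < (1::real)"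
  by (metis lt1_mult mult.commute)

lemma v_of_nat_le1: "v (of_nat n) \<le> 1"
proof (induction n)
  case (Suc n) then show ?case using vult[of 1 "of_nat n"] by simp
qed simp
lemma v_of_int_le1: "v (of_int n) \<le> 1"
  by (cases "n \<ge> 0") (metis of_int_of_nat_eq v_of_nat_le1 nonneg_int_cases,
     metis neg_0_less_iff_less not_le of_int_minus of_int_of_nat_eq pos_int_cases vneg v_of_nat_le1)

lemma prime_p: "prime p" and vp: "v (of_nat p) < 1"
  using nl unfolding nonarch_local_field_def by auto

lemma v_of_nat_lt1_iff: "v (of_nat n) < 1 \<longleftrightarrow> p dvd n"
proof
  assume "p dvd n"
  then obtain m where "n = p * m" by auto
  then show "v (of_nat n) < 1" using lt1_mult'[of "v (of_nat p)" "v (of_nat m)"] vp v_of_nat_le1[of m] by simp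
next
  assume a: "v (of_nat n) < 1"
  show "p dvd n"
  proof (rule ccontr)
    assume "\<not> p dvd n"
    then have "coprime (int p) (int n)" using prime_p
      by (simp add: prime_imp_coprime)
    then obtain a b where ab: "a * int p + b * int n = 1"
      using bezout_int[of "int p" "int n"] by (auto simp: coprime_iff_gcd_eq_1)
    then have "(1::'f) = of_int a * of_nat p + of_int b * of_nat n"
      by (metis of_int_1 of_int_add of_int_mult of_int_of_nat_eq)
    then have "v 1 \<le> max (v (of_int a * of_nat p)) (v (of_int b * of_nat n))"
      by (metis vult)
    moreover have "v (of_int a * of_nat p) < 1"
      using v_of_int_le1[of a] vp by (simp add: lt1_mult)
    moreover have "v (of_int b * of_nat n) < 1"
      using v_of_int_le1[of b] a by (simp add: lt1_mult)
    ultimately show False by simp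
  qed
qed


lemma unif_ex: "\<exists>\<pi>. 0 < v \<pi> \<and> v \<pi> < 1 \<and> (\<forall>x. x \<noteq> 0 \<longrightarrow> (\<exists>n::int. v x = v \<pi> powi n))"
  using nl unfolding nonarch_local_field_def by blast

definition "upi = (SOME \<pi>. 0 < v \<pi> \<and> v \<pi> < 1 \<and> (\<forall>x. x \<noteq> 0 \<longrightarrow> (\<exists>n::int. v x = v \<pi> powi n)))"
abbreviation "rho \<equiv> v upi"

lemma upi_props: "0 < rho" "rho < 1" "\<And>x. x \<noteq> 0 \<Longrightarrow> \<exists>n::int. v x = rho powi n"
  using someI_ex[OF unif_ex] unfolding upi_def[symmetric] by auto
lemma upi_nz[simp]: "upi \<noteq> 0" using upi_props(1) by auto

lemma disc: "v x < 1 \<Longrightarrow> v x \<le> rho"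
proof (cases "x = 0")
  case False
  assume a: "v x < 1"
  obtain n where n: "v x = rho powi n" using upi_props(3)[OF False] by blast
  show ?thesis
  proof (cases "n \<ge> 1")
    case True
    then have "rho powi n \<le> rho powi 1"
      using upi_props by (intro power_int_decreasing) auto
    then show ?thesis using n by simp
  next
    case False
    then have "n \<le> 0" by simp
    then have "rho powi n \<ge> rho powi 0"
      using upi_props by (intro power_int_decreasing) auto
    then show ?thesis using a n by simp
  qed
qed (use upi_props in simp)

lemma disc2: "v x > 1 \<Longrightarrow> v x \<ge> 1 / rho"
proof -
  assume a: "v x > 1"
  then have "x \<noteq> 0" by auto
  have "v (inverse x) < 1" using a by (simp add: inverse_less_1_iff)
  then have "v (inverse x) \<le> rho" by (rule disc)
  then have "v x * v (inverse x) \<le> v x * rho" using a by (intro mult_left_mono) auto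
  then show ?thesis using upi_props(1) a \<open>x \<noteq> 0\<close>
    by (simp add: divide_le_eq mult.commute)
qed

lemma rho_pow_small: "e > 0 \<Longrightarrow> \<exists>n. rho ^ n < e"
  using real_arch_pow_inv upi_props by blast

lemma complete: fixes s :: "nat \<Rightarrow> 'f" shows "(\<forall>e>0. \<exists>N. \<forall>m\<ge>N. \<forall>n\<ge>N. v (s m - s n) < e) \<Longrightarrow>
         (\<exists>l. \<forall>e>0. \<exists>N. \<forall>n\<ge>N. v (s n - l) < e)"
  apply (insert nl[unfolded nonarch_local_field_def])
  apply (elim conjE)
  apply (drule spec[of _ s])
  by blast

lemma resid_ex: "\<exists>R. finite R \<and> R \<subseteq> {x. v x \<le> 1} \<and> (\<forall>x. v x \<le> 1 \<longrightarrow> (\<exists>r\<in>R. v (x - r) < 1))"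
  using nl unfolding nonarch_local_field_def by blast

lemma v_of_int_lt1_iff: "v (of_int z) < 1 \<longleftrightarrow> int p dvd z"
proof -
  have "v (of_int z) = v (of_nat (nat \<bar>z\<bar>))"
    by (cases "z \<ge> 0") (auto simp: of_nat_nat)
  then show ?thesis using v_of_nat_lt1_iff[of "nat \<bar>z\<bar>"]
    by simp
qed

lemma reduced_resid: "\<exists>R. finite R \<and> R \<subseteq> {x. v x \<le> 1} \<and> (\<forall>x. v x \<le> 1 \<longrightarrow> (\<exists>r\<in>R. v (x - r) < 1))
   \<and> (\<forall>r\<in>R. \<forall>r'\<in>R. v (r - r') < 1 \<longrightarrow> r = r')"
proof -
  obtain R where R: "finite R" "R \<subseteq> {x. v x \<le> 1}" "\<forall>x. v x \<le> 1 \<longrightarrow> (\<exists>r\<in>R. v (x - r) < 1)"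
    using resid_ex by blast
  define rep where "rep x = (SOME r. r \<in> R \<and> v (x - r) < 1)" for x
  have rep: "rep x \<in> R \<and> v (x - rep x) < 1" if "v x \<le> 1" for x
    unfolding rep_def using R(3) that by (metis (mono_tags, lifting) someI_ex)
  have repeq: "rep x = rep y" if "v (x - y) < 1" for x y
  proof -
    have "\<And>r. v (x - r) < 1 \<longleftrightarrow> v (y - r) < 1"
      using vtri[of x r y for r] vtri[of y r x for r] that vsym[of x y]
      by (metis le_less_trans max_less_iff_conj)
    then show ?thesis unfolding rep_def by simp
  qed
  show ?thesis
  proof (intro exI conjI ballI allI impI)
    show "finite (rep ` R)" using R by simp
    show "rep ` R \<subseteq> {x. v x \<le> 1}" using rep R(2) by auto
    fix x assume x: "v x \<le> 1"
    obtain r where r: "r \<in> R" "v (x - r) < 1" using R(3) x by blast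
    then have "v (x - rep r) < 1" using rep[of r] R(2) vtri[of x "rep r" r]
      by (smt (verit, best) mem_Collect_eq subsetD)
    then show "\<exists>r\<in>rep ` R. v (x - r) < 1" using r by blast
  next
    fix r r' assume rr: "r \<in> rep ` R" "r' \<in> rep ` R" "v (r - r') < 1"
    then obtain a b where ab: "a \<in> R" "b \<in> R" "r = rep a" "r' = rep b" by blast
    have "v (a - rep a) < 1" "v (b - rep b) < 1" using rep ab R(2) by auto
    then have "v (a - b) < 1" using rr ab vtri[of a b "rep a"] vtri[of "rep a" b "rep b"] vsym[of b "rep b"]
      by (smt (verit))
    then show "r = r'" using ab repeq by simp
  qed
qed

lemma card_resid_dvd:
  assumes R: "finite R" "R \<subseteq> {x. v x \<le> 1}" "\<forall>x. v x \<le> 1 \<longrightarrow> (\<exists>r\<in>R. v (x - r) < 1)"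
     "\<forall>r\<in>R. \<forall>r'\<in>R. v (r - r') < 1 \<longrightarrow> r = r'"
  shows "p dvd card R"
proof -
  define rel where "rel = {(r, s). r \<in> R \<and> s \<in> R \<and> (\<exists>z::int. v (r + of_int z - s) < 1)}"
  have eq: "equiv R rel"
  proof (rule equivI)
    show "refl_on R rel" unfolding rel_def refl_on_def
      by (auto intro: exI[of _ 0])
    show "sym rel" unfolding rel_def sym_def
    proof (clarify)
      fix r s z assume "r \<in> R" "s \<in> R" "v (r + of_int z - s) < (1::real)"
      then show "\<exists>z'::int. v (s + of_int z' - r) < 1"
        by (intro exI[of _ "-z"]) (metis (no_types, opaque_lifting) add_diff_eq diff_diff_eq2 minus_diff_eq of_int_minus vneg diff_conv_add_uminus add.commute)
    qed
    show "trans rel" unfolding rel_def trans_def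
    proof (clarify)
      fix r s t z z' assume "r \<in> R" "s \<in> R" "t \<in> R" "v (r + of_int z - s) < (1::real)"
         "v (s + of_int z' - t) < (1::real)"
      then show "\<exists>z''::int. v (r + of_int z'' - t) < 1"
        using vult[of "r + of_int z - s" "s + of_int z' - t"]
        by (intro exI[of _ "z + z'"]) (simp add: algebra_simps)
    qed
  qed (auto simp: rel_def)
  show ?thesis
  proof (rule equiv_imp_dvd_card[OF R(1) eq])
    fix X assume X: "X \<in> R // rel"
    then obtain r where r: "r \<in> R" "X = rel `` {r}" by (auto simp: quotient_def)
    have ex1: "\<exists>!s. s \<in> R \<and> v (x - s) < 1" if "v x \<le> 1" for x
      using R(3,4) that vtri[of s1 s2 x for s1 s2] vsym
      by (smt (verit, best))
    define f where "f j = (THE s. s \<in> R \<and> v (r + of_nat j - s) < 1)" for j :: nat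
    have vrj: "v (r + of_nat j) \<le> 1" for j
      using vult[of r "of_nat j"] v_of_nat_le1[of j] r R(2) by auto
    have f: "f j \<in> R \<and> v (r + of_nat j - f j) < 1" for j
      unfolding f_def using theI'[OF ex1[OF vrj[of j]]] by simp
    have "bij_betw f {..<p} X"
    proof (rule bij_betwI')
      fix i j assume ij: "i \<in> {..<p}" "j \<in> {..<p}"
      show "(f i = f j) = (i = j)"
      proof
        assume fij: "f i = f j"
        have "v ((r + of_nat i - f i) - (r + of_nat j - f j)) \<le> max (v (r + of_nat i - f i)) (v (r + of_nat j - f j))"
          by (rule vdiff)
        then have "v ((r + of_nat i - f i) - (r + of_nat j - f j)) < 1"
          using f[of i] f[of j] by linarith
        then have "v (of_int (int i - int j) :: 'f) < 1" using fij by simp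
        then have "int p dvd int i - int j" using v_of_int_lt1_iff[of "int i - int j"] by simp
        have "int i - int j = 0"
        proof (rule ccontr)
          assume ne: "int i - int j \<noteq> 0"
          then have "\<bar>int p\<bar> \<le> \<bar>int i - int j\<bar>" using \<open>int p dvd int i - int j\<close> dvd_imp_le_int by blast
          then show False using ij by auto
        qed
        then show "i = j" by simp
      qed simp
    next
      fix j assume "j \<in> {..<p}"
      then show "f j \<in> X" using f[of j] r by (auto simp: rel_def intro!: exI[of _ "int j"])
    next
      fix s assume "s \<in> X"
      then obtain z where z: "s \<in> R" "v (r + of_int z - s) < 1" using r by (auto simp: rel_def)
      define j where "j = nat (z mod int p)"
      have pp: "p > 0" using prime_p prime_gt_0_nat by blast
      have jz: "int j = z mod int p" unfolding j_def using pp by simp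
      have "j < p" unfolding j_def using pp by (simp add: nat_less_iff)
      have "(int j - z) mod int p = 0" unfolding jz by (simp add: mod_diff_left_eq)
      then have "int p dvd (int j - z)" by (rule mod_0_imp_dvd)
      then have "v (of_int (int j - z) :: 'f) < 1" using v_of_int_lt1_iff[of "int j - z"] by blast
      then have "v ((r + of_int z - s) + of_int (int j - z)) < 1"
        using vult[of "r + of_int z - s" "of_int (int j - z)"] z by simp
      then have "v (r + of_nat j - s) < 1" by (simp add: algebra_simps)
      then have "f j = s" using ex1[OF vrj[of j]] f[of j] z by blast
      then show "\<exists>j\<in>{..<p}. s = f j" using \<open>j < p\<close> by auto
    qed
    then show "p dvd card X" using bij_betw_same_card by fastforce
  qed
qed

end


definition mk2 :: "'a::field \<Rightarrow> 'a \<Rightarrow> 'a \<Rightarrow> 'a \<Rightarrow> 'a^2^2" where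
  "mk2 a b c d = (\<chi> i. \<chi> j. if i = 1 then (if j = 1 then a else b) else (if j = 1 then c else d))"

lemma two_ne_one[simp]: "(2::2) \<noteq> 1" "(1::2) \<noteq> 2" by auto

lemma mk2_ent[simp]: "mk2 a b c d $ 1 $ 1 = a" "mk2 a b c d $ 1 $ 2 = b"
  "mk2 a b c d $ 2 $ 1 = c" "mk2 a b c d $ 2 $ 2 = d"
  by (auto simp: mk2_def)

lemma mat_eq2: "(A::'a^2^2) = B \<longleftrightarrow> A$1$1 = B$1$1 \<and> A$1$2 = B$1$2 \<and> A$2$1 = B$2$1 \<and> A$2$2 = B$2$2"
  by (auto simp: vec_eq_iff forall_2)

lemma mk2_eta: "(A::'a::field^2^2) = mk2 (A$1$1) (A$1$2) (A$2$1) (A$2$2)"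
  by (simp add: mat_eq2)

lemma mult_ent: "((A::'a::field^2^2) ** B) $ i $ j = A$i$1 * B$1$j + A$i$2 * B$2$j"
  by (simp add: matrix_matrix_mult_def sum_2)

lemma mk2_mult[simp]: "mk2 a b c d ** mk2 a' b' c' d' = mk2 (a*a' + b*c') (a*b' + b*d') (c*a' + d*c') (c*b' + d*d')"
  by (simp add: mat_eq2 mult_ent)

lemma det_mk2[simp]: "det (mk2 a b c d) = a * d - b * c"
  by (simp add: det_2)

lemma det2: "det (A::'a::field^2^2) = A$1$1 * A$2$2 - A$1$2 * A$2$1"
  by (simp add: det_2)

definition "wu x = mk2 0 1 1 x"
definition "uu y = mk2 1 y 0 1"
definition "dg a d = mk2 a 0 0 d"
definition "idm = mk2 1 0 0 1"

lemma wu_uu: "wu x ** uu y = wu (x + y)" by (simp add: wu_def uu_def add.commute)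
lemma wu_dg: "wu x ** dg 1 d = dg d 1 ** wu (x * d)" by (simp add: wu_def dg_def)
lemma wu_lower: "x \<noteq> 0 \<Longrightarrow> wu x = mk2 (- 1/x) 1 0 x ** mk2 1 0 (1/x) 1"
  by (simp add: wu_def mat_eq2)
lemma bruhat: "(g::'a::field^2^2) $ 2 $ 1 \<noteq> 0 \<Longrightarrow>
   g = mk2 (g$1$2 - g$1$1 * (g$2$2/g$2$1)) (g$1$1) 0 (g$2$1) ** wu (g$2$2/g$2$1)"
  by (simp add: wu_def mat_eq2)
lemma mult_idm: "(g::'a::field^2^2) ** idm = g" by (simp add: idm_def mat_eq2 mult_ent)

lemma GL2_iff: "g \<in> GL2 \<longleftrightarrow> det g \<noteq> 0" by (simp add: GL2_def)
lemma Borel_iff: "b \<in> Borel \<longleftrightarrow> b$1$1 \<noteq> 0 \<and> b$2$2 \<noteq> 0 \<and> b$2$1 = 0"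
  by (auto simp: Borel_def det2)
lemma Borel_GL2: "b \<in> Borel \<Longrightarrow> b \<in> GL2" by (simp add: Borel_def GL2_def)
lemma GL2_mult: "g \<in> GL2 \<Longrightarrow> h \<in> GL2 \<Longrightarrow> g ** h \<in> GL2" by (simp add: GL2_def det_mul)
lemma GL2_mult_iff: "h \<in> GL2 \<Longrightarrow> g ** h \<in> GL2 \<longleftrightarrow> g \<in> GL2" by (simp add: GL2_def det_mul)
lemma wu_GL2[simp]: "wu x \<in> GL2" by (simp add: GL2_def wu_def)
lemma uu_Borel[simp]: "uu y \<in> Borel" by (simp add: Borel_iff uu_def)
lemma dg_Borel[simp]: "a \<noteq> 0 \<Longrightarrow> d \<noteq> 0 \<Longrightarrow> dg a d \<in> Borel" by (simp add: Borel_iff dg_def)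
lemma idm_GL2[simp]: "idm \<in> GL2" by (simp add: GL2_def idm_def)

lemma mult_lt_bound: "0 \<le> (a::real) \<Longrightarrow> a < c \<Longrightarrow> 0 \<le> b \<Longrightarrow> b \<le> M \<Longrightarrow> 0 < M \<Longrightarrow> a * b < c * M"
  by (meson le_less_trans mult_left_mono mult_strict_right_mono)

context LF begin

lemma sc': "(\<forall>a d. a \<noteq> 0 \<and> d \<noteq> 0 \<longrightarrow> chi a d \<noteq> 0)" "(\<forall>a d a' d'. a \<noteq> 0 \<and> d \<noteq> 0 \<and> a' \<noteq> 0 \<and> d' \<noteq> 0 \<longrightarrow>
        chi (a * a') (d * d') = chi a d * chi a' d')" "(\<forall>a d. a \<noteq> 0 \<and> d \<noteq> 0 \<longrightarrow> (\<exists>e>0. \<forall>a' d'. a' \<noteq> 0 \<and> d' \<noteq> 0 \<and>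
        v (a' - a) < e \<and> v (d' - d) < e \<longrightarrow> chi a' d' = chi a d))"
  using sc unfolding smooth_char_def by auto
lemma chi_nz: "a \<noteq> 0 \<Longrightarrow> d \<noteq> 0 \<Longrightarrow> chi a d \<noteq> 0" using sc'(1) by blast
lemma chi_mult: "a \<noteq> 0 \<Longrightarrow> d \<noteq> 0 \<Longrightarrow> a' \<noteq> 0 \<Longrightarrow> d' \<noteq> 0 \<Longrightarrow> chi (a * a') (d * d') = chi a d * chi a' d'"
  using sc'(2) by blast
lemma chi_smooth: "a \<noteq> 0 \<Longrightarrow> d \<noteq> 0 \<Longrightarrow> \<exists>e>0. \<forall>a' d'. a' \<noteq> 0 \<and> d' \<noteq> 0 \<and>
        v (a' - a) < e \<and> v (d' - d) < e \<longrightarrow> chi a' d' = chi a d"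
  using sc'(3) by blast
lemma chi11[simp]: "chi 1 1 = 1"
  using chi_mult[of 1 1 1 1] chi_nz[of 1 1] by simp

abbreviation "V \<equiv> Ind v chi"

lemma indD: assumes "f \<in> V"
  shows "\<And>x. x \<notin> GL2 \<Longrightarrow> f x = 0" "locally_constant_GL2 v f"
     "\<And>b g. b \<in> Borel \<Longrightarrow> g \<in> GL2 \<Longrightarrow> f (b ** g) = char_on_P chi b * f g"
  using assms unfolding Ind_def by auto

lemma ind_lc: "f \<in> V \<Longrightarrow> g \<in> GL2 \<Longrightarrow> \<exists>e>0. \<forall>h\<in>GL2. (\<forall>i j. v (h $ i $ j - g $ i $ j) < e) \<longrightarrow> f h = f g"
  using indD(2) unfolding locally_constant_GL2_def by blast

lemma ind_borel: "f \<in> V \<Longrightarrow> b \<in> Borel \<Longrightarrow> f b = chi (b$1$1) (b$2$2) * f idm"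
  using indD(3)[of f b idm] by (simp add: mult_idm char_on_P_def)

lemma ind_big: "f \<in> V \<Longrightarrow> g \<in> GL2 \<Longrightarrow> g$2$1 \<noteq> 0 \<Longrightarrow>
   f g = chi (- det g / g$2$1) (g$2$1) * f (wu (g$2$2/g$2$1))"
proof -
  assume f: "f \<in> V" and g: "g \<in> GL2" "g$2$1 \<noteq> 0"
  define b where "b = mk2 (g$1$2 - g$1$1 * (g$2$2/g$2$1)) (g$1$1) 0 (g$2$1)"
  have gb: "g = b ** wu (g$2$2/g$2$1)" unfolding b_def using bruhat[OF g(2)] .
  have e: "g$1$2 - g$1$1 * (g$2$2/g$2$1) = - (g$1$1 * g$2$2 - g$1$2 * g$2$1) / g$2$1"
    using g(2) by (simp add: field_simps)
  have "b$1$1 = - det g / g$2$1" unfolding b_def det2 e by simp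
  moreover have "b \<in> Borel" using g unfolding b_def Borel_iff GL2_iff det2 e by simp
  ultimately show ?thesis using indD(3)[OF f, of b "wu (g$2$2/g$2$1)"] gb
    by (simp add: char_on_P_def b_def)
qed

lemma ind_eqI: assumes "f \<in> V" "f' \<in> V" "f idm = f' idm" "\<And>x. f (wu x) = f' (wu x)"
  shows "f = f'"
proof
  fix g
  show "f g = f' g"
  proof (cases "g \<in> GL2")
    case False then show ?thesis using indD(1) assms by metis
  next
    case True
    show ?thesis
    proof (cases "g$2$1 = 0")
      case True
      then have "g \<in> Borel" using \<open>g \<in> GL2\<close> by (simp add: Borel_def GL2_def)
      then show ?thesis using ind_borel assms by metis
    next
      case False
      then show ?thesis using ind_big[OF assms(1) \<open>g \<in> GL2\<close>] ind_big[OF assms(2) \<open>g \<in> GL2\<close>] assms(4) by simp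
    qed
  qed
qed

lemma rt_in: "f \<in> V \<Longrightarrow> h \<in> GL2 \<Longrightarrow> right_translate h f \<in> V"
proof -
  assume f: "f \<in> V" and h: "h \<in> GL2"
  show ?thesis unfolding Ind_def mem_Collect_eq right_translate_def
  proof (intro conjI allI impI ballI)
    fix x :: "'f^2^2" assume "x \<notin> GL2" then show "f (x ** h) = 0" using indD(1)[OF f] GL2_mult_iff[OF h] by blast
  next
    fix b g :: "'f^2^2" assume "b \<in> Borel" "g \<in> GL2"
    then show "f (b ** g ** h) = char_on_P chi b * f (g ** h)"
      using indD(3)[OF f, of b "g ** h"] GL2_mult[OF _ h] by (simp add: matrix_mul_assoc)
  next
    show "locally_constant_GL2 v (\<lambda>x::'f^2^2. f (x ** h))"
      unfolding locally_constant_GL2_def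
    proof
      fix g :: "'f^2^2" assume g: "g \<in> GL2"
      obtain e where e: "e > 0" "\<forall>h'\<in>GL2. (\<forall>i j. v (h' $ i $ j - (g ** h) $ i $ j) < e) \<longrightarrow> f h' = f (g ** h)"
        using ind_lc[OF f GL2_mult[OF g h]] by blast
      define M where "M = max 1 (max (max (v (h$1$1)) (v (h$1$2))) (max (v (h$2$1)) (v (h$2$2))))"
      have M1: "M \<ge> 1" unfolding M_def by simp
      have M2: "v (h$i$j) \<le> M" for i j unfolding M_def using exhaust_2[of i] exhaust_2[of j] by auto
      note M = M1 M2
      show "\<exists>e>0. \<forall>h'\<in>GL2. (\<forall>i j. v (h' $ i $ j - g $ i $ j) < e) \<longrightarrow> f (h' ** h) = f (g ** h)"
      proof (intro exI conjI ballI impI allI)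
        show "e / M > 0" using e M by simp
        fix h' :: "'f^2^2" assume h': "h' \<in> GL2" "\<forall>i j. v (h' $ i $ j - g $ i $ j) < e / M"
        have "v ((h' ** h) $ i $ j - (g ** h) $ i $ j) < e" for i j
        proof -
          have eq: "(h' ** h) $ i $ j - (g ** h) $ i $ j = (h'$i$1 - g$i$1) * h$1$j + (h'$i$2 - g$i$2) * h$2$j"
            by (simp add: mult_ent algebra_simps)
          have b1: "v ((h'$i$1 - g$i$1) * h$1$j) < e"
          proof (cases "h$1$j = 0")
            case False
            then have "v (h$1$j) > 0" by simp
            have "v (h'$i$1 - g$i$1) * v (h$1$j) < e / M * M"
              using h'(2) M(2)[of 1 j] M(1) \<open>v (h$1$j) > 0\<close>
              by (intro mult_lt_bound) auto
            then show ?thesis using M by simp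
          qed (use e in simp)
          have b2: "v ((h'$i$2 - g$i$2) * h$2$j) < e"
          proof (cases "h$2$j = 0")
            case False
            then have "v (h$2$j) > 0" by simp
            have "v (h'$i$2 - g$i$2) * v (h$2$j) < e / M * M"
              using h'(2) M(2)[of 2 j] M(1) \<open>v (h$2$j) > 0\<close>
              by (intro mult_lt_bound) auto
            then show ?thesis using M by simp
          qed (use e in simp)
          show ?thesis unfolding eq using vult[of "(h'$i$1 - g$i$1) * h$1$j" "(h'$i$2 - g$i$2) * h$2$j"] b1 b2
            by linarith
        qed
        then show "f (h' ** h) = f (g ** h)" using e(2) GL2_mult[OF h' (1) h] by blast
      qed
    qed
  qed
qed

end


context LF begin

definition close :: "real \<Rightarrow> 'f^2^2 \<Rightarrow> 'f^2^2 \<Rightarrow> bool" where "close e h g \<longleftrightarrow> (\<forall>i j. v (h$i$j - g$i$j) < e)"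
definition cont :: "('f^2^2) set \<Rightarrow> ('f^2^2 \<Rightarrow> 'f) \<Rightarrow> bool" where "cont S \<Phi> \<longleftrightarrow> (\<forall>g\<in>S. \<forall>\<epsilon>>0. \<exists>\<delta>>0. \<forall>h\<in>GL2. close \<delta> h g \<longrightarrow> v (\<Phi> h - \<Phi> g) < \<epsilon>)"
definition LCon :: "('f^2^2) set \<Rightarrow> ('f^2^2 \<Rightarrow> 'b) \<Rightarrow> bool" where "LCon S F \<longleftrightarrow> (\<forall>g\<in>S. \<exists>e>0. \<forall>h\<in>GL2. close e h g \<longrightarrow> F h = F g)"

lemma close_mono: "close e h g \<Longrightarrow> e \<le> e' \<Longrightarrow> close e' h g"
  unfolding close_def by (meson less_le_trans)

lemma ind_LCon: "f \<in> V \<Longrightarrow> LCon GL2 f"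
  using ind_lc unfolding LCon_def close_def by blast

lemma cont_ent: "cont S (\<lambda>g. g$i$j)"
  unfolding cont_def close_def by blast

lemma cont_const: "cont S (\<lambda>g. c)"
  unfolding cont_def by (auto intro: exI[of _ 1])

lemma cont_add: assumes "cont S F" "cont S G" shows "cont S (\<lambda>g. F g + G g)"
  unfolding cont_def
proof (intro ballI allI impI)
  fix g :: "'f^2^2" and \<epsilon> :: real assume g: "g \<in> S" and e: "(\<epsilon>::real) > 0"
  obtain d1 where d1: "d1 > 0" "\<forall>h\<in>GL2. close d1 h g \<longrightarrow> v (F h - F g) < \<epsilon>" using assms(1) g e unfolding cont_def by blast
  obtain d2 where d2: "d2 > 0" "\<forall>h\<in>GL2. close d2 h g \<longrightarrow> v (G h - G g) < \<epsilon>" using assms(2) g e unfolding cont_def by blast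
  show "\<exists>\<delta>>0. \<forall>h\<in>GL2. close \<delta> h g \<longrightarrow> v (F h + G h - (F g + G g)) < \<epsilon>"
  proof (intro exI[of _ "min d1 d2"] conjI ballI impI)
    fix h assume "h \<in> GL2" "close (min d1 d2) h g"
    then have "v (F h - F g) < \<epsilon>" "v (G h - G g) < \<epsilon>" using d1 d2 close_mono by auto
    then show "v (F h + G h - (F g + G g)) < \<epsilon>" using vult[of "F h - F g" "G h - G g"]
      by (simp add: algebra_simps)
  qed (use d1 d2 in auto)
qed

lemma cont_neg: assumes "cont S F" shows "cont S (\<lambda>g. - F g)"
proof -
  have "v (- F h - - F g) = v (F h - F g)" for h g
    by (metis minus_diff_minus vneg)
  then show ?thesis using assms unfolding cont_def by simp
qed

lemma cont_diff: assumes "cont S F" "cont S G" shows "cont S (\<lambda>g. F g - G g)"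
  using cont_add[OF assms(1) cont_neg[OF assms(2)]] by simp

lemma cont_mult: assumes "cont S F" "cont S G" shows "cont S (\<lambda>g. F g * G g)"
  unfolding cont_def
proof (intro ballI allI impI)
  fix g :: "'f^2^2" and \<epsilon> :: real assume g: "g \<in> S" and e: "(\<epsilon>::real) > 0"
  have gp: "v (G g) + 1 > 0" "v (F g) + 1 > 0" using vnn[of "G g"] vnn[of "F g"] by linarith+
  have e1: "\<epsilon> / (v (G g) + 1) > 0" using e by (simp add: add_nonneg_pos)
  have e2: "min 1 (\<epsilon> / (v (F g) + 1)) > 0" using e by (simp add: add_nonneg_pos)
  obtain d1 where d1: "d1 > 0" "\<forall>h\<in>GL2. close d1 h g \<longrightarrow> v (F h - F g) < \<epsilon> / (v (G g) + 1)"
    using assms(1) g e1 unfolding cont_def by blast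
  obtain d2 where d2: "d2 > 0" "\<forall>h\<in>GL2. close d2 h g \<longrightarrow> v (G h - G g) < min 1 (\<epsilon> / (v (F g) + 1))"
    using assms(2) g e2 unfolding cont_def by blast
  show "\<exists>\<delta>>0. \<forall>h\<in>GL2. close \<delta> h g \<longrightarrow> v (F h * G h - F g * G g) < \<epsilon>"
  proof (intro exI[of _ "min d1 d2"] conjI ballI impI)
    fix h assume "h \<in> GL2" "close (min d1 d2) h g"
    then have h1: "v (F h - F g) < \<epsilon> / (v (G g) + 1)" and h2: "v (G h - G g) < min 1 (\<epsilon> / (v (F g) + 1))"
      using d1 d2 close_mono by auto
    have "v (G h) \<le> max (v (G h - G g)) (v (G g))" using vult[of "G h - G g" "G g"] by simp
    moreover have "max (v (G h - G g)) (v (G g)) \<le> v (G g) + 1"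
    proof -
      have a: "v (G h - G g) < 1" using h2 by simp
      have b: "0 \<le> v (G g)" by simp
      show ?thesis using a b by linarith
    qed
    ultimately have vG: "v (G h) \<le> v (G g) + 1" by linarith
    have t1: "v ((F h - F g) * G h) < \<epsilon>"
    proof -
      have "v (F h - F g) * v (G h) \<le> v (F h - F g) * (v (G g) + 1)"
        using vG by (intro mult_left_mono) auto
      also have "\<dots> < \<epsilon> / (v (G g) + 1) * (v (G g) + 1)"
        using h1 by (intro mult_strict_right_mono) (auto simp: add_nonneg_pos)
      also have "\<dots> = \<epsilon>" using gp by simp
      finally show ?thesis by simp
    qed
    have t2: "v (F g * (G h - G g)) < \<epsilon>"
    proof -
      have "v (F g) * v (G h - G g) \<le> v (F g) * (\<epsilon> / (v (F g) + 1))"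
        using h2 by (intro mult_left_mono) auto
      also have "\<dots> < (v (F g) + 1) * (\<epsilon> / (v (F g) + 1))"
        using e by (intro mult_strict_right_mono) (auto simp: add_nonneg_pos)
      also have "\<dots> = \<epsilon>" using gp by simp
      finally show ?thesis by simp
    qed
    have "F h * G h - F g * G g = (F h - F g) * G h + F g * (G h - G g)" by (simp add: algebra_simps)
    then show "v (F h * G h - F g * G g) < \<epsilon>"
      using vult[of "(F h - F g) * G h" "F g * (G h - G g)"] t1 t2 by simp
  qed (use d1 d2 in auto)
qed

lemma cont_inv: assumes "cont S F" "\<And>g. g \<in> S \<Longrightarrow> F g \<noteq> 0" shows "cont S (\<lambda>g. inverse (F g))"
  unfolding cont_def
proof (intro ballI allI impI)
  fix g :: "'f^2^2" and \<epsilon> :: real assume g: "g \<in> S" and e: "(\<epsilon>::real) > 0"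
  have Fg: "v (F g) > 0" using assms(2)[OF g] by simp
  have e1: "min (v (F g)) (\<epsilon> * v (F g) * v (F g)) > 0" using e Fg by simp
  obtain d1 where d1: "d1 > 0" "\<forall>h\<in>GL2. close d1 h g \<longrightarrow> v (F h - F g) < min (v (F g)) (\<epsilon> * v (F g) * v (F g))"
    using assms(1) g e1 unfolding cont_def by blast
  show "\<exists>\<delta>>0. \<forall>h\<in>GL2. close \<delta> h g \<longrightarrow> v (inverse (F h) - inverse (F g)) < \<epsilon>"
  proof (intro exI[of _ d1] conjI ballI impI)
    fix h assume "h \<in> GL2" "close d1 h g"
    then have h1: "v (F h - F g) < v (F g)" "v (F h - F g) < \<epsilon> * v (F g) * v (F g)" using d1 by auto
    have vh: "v (F h) = v (F g)" using h1(1) by (rule vclose)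
    then have "F h \<noteq> 0" using Fg by auto
    then have "inverse (F h) - inverse (F g) = - (F h - F g) / (F h * F g)"
      using assms(2)[OF g] by (simp add: field_simps)
    then have "v (inverse (F h) - inverse (F g)) = v (F h - F g) / (v (F g) * v (F g))" using vh vsym[of "F g" "F h"] by simp
    also have "\<dots> < \<epsilon>" using h1(2) Fg by (simp add: divide_less_eq mult.assoc)
    finally show "v (inverse (F h) - inverse (F g)) < \<epsilon>" .
  qed (use d1 in auto)
qed

lemma cont_div: assumes "cont S F" "cont S G" "\<And>g. g \<in> S \<Longrightarrow> G g \<noteq> 0" shows "cont S (\<lambda>g. F g / G g)"
  using cont_mult[OF assms(1) cont_inv[OF assms(2,3)]] by (simp add: divide_inverse)

lemma cont_det: "cont S (\<lambda>g. det g)"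
  unfolding det2 by (intro cont_diff cont_mult cont_ent)

abbreviation "S1 \<equiv> {g \<in> GL2. g$2$1 \<noteq> 0}"

lemma cont_ratio: "cont S1 (\<lambda>g. g$2$2 / g$2$1)"
  by (intro cont_div cont_ent) auto

lemma cont_A: "cont S1 (\<lambda>g. - det g / g$2$1)"
  by (intro cont_div cont_neg cont_det cont_ent) auto

definition chiB :: "'f^2^2 \<Rightarrow> 'k" where "chiB g = chi (- det g / g$2$1) (g$2$1)"

lemma chiB_LCon: "LCon S1 chiB"
  unfolding LCon_def
proof
  fix g :: "'f^2^2" assume g: "g \<in> S1"
  then have a0: "- det g / g$2$1 \<noteq> 0" and d0: "g$2$1 \<noteq> 0" by (auto simp: GL2_iff)
  obtain e0 where e0: "e0 > 0" "\<forall>a' d'. a' \<noteq> 0 \<and> d' \<noteq> 0 \<and> v (a' - (- det g / g$2$1)) < e0 \<and> v (d' - g$2$1) < e0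
      \<longrightarrow> chi a' d' = chi (- det g / g$2$1) (g$2$1)"
    using chi_smooth[OF a0 d0] by blast
  obtain d1 where d1: "d1 > 0" "\<forall>h\<in>GL2. close d1 h g \<longrightarrow> v (- det h / h$2$1 - (- det g / g$2$1)) < e0"
    using cont_A g e0 unfolding cont_def by blast
  show "\<exists>e>0. \<forall>h\<in>GL2. close e h g \<longrightarrow> chiB h = chiB g"
  proof (intro exI[of _ "min d1 (min e0 (v (g$2$1)))"] conjI ballI impI)
    fix h assume h: "h \<in> GL2" "close (min d1 (min e0 (v (g$2$1)))) h g"
    then have hv: "v (h$2$1 - g$2$1) < v (g$2$1)" "v (h$2$1 - g$2$1) < e0" unfolding close_def by auto
    have "v (h$2$1) = v (g$2$1)" using hv(1) by (rule vclose)
    then have h21: "h$2$1 \<noteq> 0" using d0 by auto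
    have "v (- det h / h$2$1 - (- det g / g$2$1)) < e0" using d1 h close_mono by auto
    moreover have "- det h / h$2$1 \<noteq> 0" using h h21 by (auto simp: GL2_iff)
    ultimately show "chiB h = chiB g" unfolding chiB_def using e0(2)[rule_format, of "- det h / h$2$1" "h$2$1"] h21 hv(2) by simp
  qed (use d1 e0 d0 in auto)
qed

definition cutb :: "'f \<Rightarrow> 'f \<Rightarrow> 'f^2^2 \<Rightarrow> bool" where "cutb a s g \<longleftrightarrow> g$2$1 \<noteq> 0 \<and> v ((g$2$2/g$2$1 - a) * s) \<le> 1"

lemma cutb_LCon: assumes s: "s \<noteq> 0" shows "LCon GL2 (cutb a s)"
  unfolding LCon_def
proof
  fix g :: "'f^2^2" assume g: "g \<in> GL2"
  show "\<exists>e>0. \<forall>h\<in>GL2. close e h g \<longrightarrow> cutb a s h = cutb a s g"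
  proof (cases "g$2$1 = 0")
    case False
    have e1: "1 / v s > 0" using s by simp
    obtain d1 where d1: "d1 > 0" "\<forall>h\<in>GL2. close d1 h g \<longrightarrow> v (h$2$2/h$2$1 - g$2$2/g$2$1) < 1 / v s"
      using cont_ratio g False e1 unfolding cont_def by blast
    show ?thesis
    proof (intro exI[of _ "min d1 (v (g$2$1))"] conjI ballI impI)
      fix h assume h: "h \<in> GL2" "close (min d1 (v (g$2$1))) h g"
      then have "v (h$2$1 - g$2$1) < v (g$2$1)" unfolding close_def by auto
      then have "v (h$2$1) = v (g$2$1)" by (rule vclose)
      then have h21: "h$2$1 \<noteq> 0" using False by auto
      have "v (h$2$2/h$2$1 - g$2$2/g$2$1) < 1 / v s" using d1 h close_mono by auto
      then have "v (h$2$2/h$2$1 - g$2$2/g$2$1) * v s < 1" using s by (simp add: less_divide_eq)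
      then have small: "v ((h$2$2/h$2$1 - g$2$2/g$2$1) * s) < 1" by (simp only: vmult')
      have eq: "(h$2$2/h$2$1 - a) * s = (g$2$2/g$2$1 - a) * s + (h$2$2/h$2$1 - g$2$2/g$2$1) * s"
        by (simp add: algebra_simps)
      have "v ((h$2$2/h$2$1 - a) * s) \<le> 1 \<longleftrightarrow> v ((g$2$2/g$2$1 - a) * s) \<le> 1"
      proof
        assume "v ((h$2$2/h$2$1 - a) * s) \<le> 1"
        moreover have "(g$2$2/g$2$1 - a) * s = (h$2$2/h$2$1 - a) * s + (- ((h$2$2/h$2$1 - g$2$2/g$2$1) * s))"
          using eq by simp
        ultimately show "v ((g$2$2/g$2$1 - a) * s) \<le> 1"
          using vult[of "(h$2$2/h$2$1 - a) * s" "- ((h$2$2/h$2$1 - g$2$2/g$2$1) * s)"] small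
          by (simp del: vmult')
      next
        assume "v ((g$2$2/g$2$1 - a) * s) \<le> 1"
        then show "v ((h$2$2/h$2$1 - a) * s) \<le> 1"
          using eq vult[of "(g$2$2/g$2$1 - a) * s" "(h$2$2/h$2$1 - g$2$2/g$2$1) * s"] small
          by (simp del: vmult')
      qed
      then show "cutb a s h = cutb a s g" unfolding cutb_def using h21 False by simp
    qed (use d1 False in auto)
  next
    case True
    then have g22: "g$2$2 \<noteq> 0" using g by (auto simp: GL2_iff det2)
    define K where "K = max (v a) (1 / v s) + 1"
    have K: "K > v a" "K > 1 / v s" unfolding K_def by auto
    have K0: "K > 0" using K(1) vnn[of a] by linarith
    note K = K0 K
    show ?thesis
    proof (intro exI[of _ "min (v (g$2$2)) (v (g$2$2) / K)"] conjI ballI impI)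
      fix h assume h: "h \<in> GL2" "close (min (v (g$2$2)) (v (g$2$2) / K)) h g"
      then have "v (h$2$2 - g$2$2) < v (g$2$2)" "v (h$2$1 - g$2$1) < v (g$2$2) / K" unfolding close_def by auto
      then have h22: "v (h$2$2) = v (g$2$2)" and h21: "v (h$2$1) < v (g$2$2) / K"
        using vclose[of "h$2$2" "g$2$2"] True by auto
      have "\<not> cutb a s h"
      proof
        assume c: "cutb a s h"
        then have nz: "h$2$1 \<noteq> 0" unfolding cutb_def by simp
        have "v (h$2$1) * K < v (g$2$2)" using h21 K(1) by (simp add: less_divide_eq)
        then have "K * v (h$2$1) < v (h$2$2)" using h22 by (simp add: mult.commute)
        then have big: "K < v (h$2$2 / h$2$1)" using nz by (simp add: less_divide_eq)
        then have "v (h$2$2 / h$2$1 - a) = v (h$2$2 / h$2$1)"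
          using vadd_less[of "- a" "h$2$2 / h$2$1"] K by simp
        then have "v (h$2$2 / h$2$1 - a) > 1 / v s" using big K by simp
        then have "v (h$2$2 / h$2$1 - a) * v s > 1" using s by (simp add: divide_less_eq)
        then have "v ((h$2$2 / h$2$1 - a) * s) > 1" by (simp only: vmult')
        then show False using c unfolding cutb_def by simp
      qed
      moreover have "\<not> cutb a s g" using True unfolding cutb_def by simp
      ultimately show "cutb a s h = cutb a s g" by simp
    qed (use K g22 in auto)
  qed
qed

lemma cutb_borel: "b \<in> Borel \<Longrightarrow> cutb a s (b ** g) = cutb a s g"
  unfolding cutb_def Borel_iff by (simp add: mult_ent)

lemma cutb_wu[simp]: "cutb a s (wu x) \<longleftrightarrow> v ((x - a) * s) \<le> 1"
  unfolding cutb_def wu_def by simp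

lemma cutb_idm[simp]: "\<not> cutb a s idm"
  unfolding cutb_def idm_def by simp

end


context LF begin

lemma LCon_I: assumes "\<And>g. g \<in> S \<Longrightarrow> \<exists>e>0. \<forall>h\<in>GL2. close e h g \<longrightarrow> F h = F g" shows "LCon S F"
  using assms unfolding LCon_def by blast

lemma LCon_D: "LCon S F \<Longrightarrow> g \<in> S \<Longrightarrow> \<exists>e>0. \<forall>h\<in>GL2. close e h g \<longrightarrow> F h = F g"
  unfolding LCon_def by blast

lemma LCon2: assumes "LCon S F" "LCon S G" "\<And>g. H g = K (F g) (G g)" shows "LCon S H"
proof (rule LCon_I)
  fix g :: "'f^2^2" assume g: "g \<in> S"
  obtain e1 where e1: "e1 > 0" "\<forall>h\<in>GL2. close e1 h g \<longrightarrow> F h = F g" using LCon_D[OF assms(1) g] by blast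
  obtain e2 where e2: "e2 > 0" "\<forall>h\<in>GL2. close e2 h g \<longrightarrow> G h = G g" using LCon_D[OF assms(2) g] by blast
  show "\<exists>e>0. \<forall>h\<in>GL2. close e h g \<longrightarrow> H h = H g"
  proof (intro exI[of _ "min e1 e2"] conjI ballI impI)
    fix h :: "'f^2^2" assume "h \<in> GL2" "close (min e1 e2) h g"
    then show "H h = H g" using e1 e2 close_mono[of "min e1 e2" h g] assms(3) by simp
  qed (use e1 e2 in simp)
qed

lemma indI: assumes "\<And>x. x \<notin> GL2 \<Longrightarrow> f x = 0" "LCon GL2 f"
   "\<And>b g. b \<in> Borel \<Longrightarrow> g \<in> GL2 \<Longrightarrow> f (b ** g) = chi (b$1$1) (b$2$2) * f g"
 shows "f \<in> V"
  using assms unfolding Ind_def locally_constant_GL2_def LCon_def close_def char_on_P_def by auto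

lemma zero_in: "(\<lambda>x. 0) \<in> V"
  by (rule indI) (auto simp: LCon_def intro: exI[of _ 1])

lemma add_in: "f \<in> V \<Longrightarrow> f' \<in> V \<Longrightarrow> (\<lambda>x. f x + f' x) \<in> V"
  by (rule indI) (auto simp: indD(1) indD(3) char_on_P_def algebra_simps intro: LCon2[OF ind_LCon ind_LCon])

lemma smult_in: "f \<in> V \<Longrightarrow> (\<lambda>x. c * f x) \<in> V"
  by (rule indI) (auto simp: indD(1) indD(3) char_on_P_def algebra_simps intro: LCon2[OF ind_LCon ind_LCon])

lemma diff_in: "f \<in> V \<Longrightarrow> f' \<in> V \<Longrightarrow> (\<lambda>x. f x - f' x) \<in> V"
  using add_in[of f "\<lambda>x. (-1) * f' x"] smult_in[of f' "-1"] by simp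

definition ecut :: "('f^2^2 \<Rightarrow> 'k) \<Rightarrow> 'f \<Rightarrow> 'f \<Rightarrow> 'f^2^2 \<Rightarrow> 'k" where "ecut f a s = (\<lambda>g. if cutb a s g then f g else 0)"
definition eball :: "'f \<Rightarrow> 'f \<Rightarrow> 'f^2^2 \<Rightarrow> 'k" where "eball a s = (\<lambda>g. if det g \<noteq> 0 \<and> cutb a s g then chiB g else 0)"

lemma ecut_in: assumes f: "f \<in> V" and s: "s \<noteq> 0" shows "ecut f a s \<in> V"
proof (rule indI)
  show "ecut f a s x = 0" if "x \<notin> GL2" for x using indD(1)[OF f that] by (simp add: ecut_def)
  show "LCon GL2 (ecut f a s)"
    by (rule LCon2[OF ind_LCon[OF f] cutb_LCon[OF s], of _ "\<lambda>y c. if c then y else 0"]) (simp add: ecut_def)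
  fix b g :: "'f^2^2" assume "b \<in> Borel" "g \<in> GL2"
  then show "ecut f a s (b ** g) = chi (b$1$1) (b$2$2) * ecut f a s g"
    using indD(3)[OF f] cutb_borel[of b a s g] by (simp add: ecut_def char_on_P_def)
qed

lemma chiB_borel: assumes b: "b \<in> Borel" and g: "g \<in> GL2" "g$2$1 \<noteq> 0"
  shows "chiB (b ** g) = chi (b$1$1) (b$2$2) * chiB g"
proof -
  have b': "b$1$1 \<noteq> 0" "b$2$2 \<noteq> 0" "b$2$1 = 0" using b by (auto simp: Borel_iff)
  have db: "det b = b$1$1 * b$2$2" using b' by (simp add: det2)
  have e21: "(b ** g)$2$1 = b$2$2 * g$2$1" using b' by (simp add: mult_ent)
  have X: "- det (b ** g) / (b ** g)$2$1 = b$1$1 * (- det g / g$2$1)"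
    unfolding det_mul db e21 using b' g by (simp add: field_simps)
  have "- det g / g$2$1 \<noteq> 0" using g by (simp add: GL2_iff)
  then have "chi (b$1$1 * (- det g / g$2$1)) (b$2$2 * g$2$1) = chi (b$1$1) (b$2$2) * chi (- det g / g$2$1) (g$2$1)"
    using chi_mult[of "b$1$1" "b$2$2" "- det g / g$2$1" "g$2$1"] b' g by simp
  then show ?thesis unfolding chiB_def e21[symmetric] X[symmetric] by simp
qed

lemma eball_in: assumes s: "s \<noteq> 0" shows "eball a s \<in> V"
proof (rule indI)
  show "eball a s x = 0" if "x \<notin> GL2" for x using that by (simp add: eball_def GL2_iff)
  show "LCon GL2 (eball a s)"
  proof (rule LCon_I)
    fix g :: "'f^2^2" assume g: "g \<in> GL2"
    obtain e2 where e2: "e2 > 0" "\<forall>h\<in>GL2. close e2 h g \<longrightarrow> cutb a s h = cutb a s g"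
      using LCon_D[OF cutb_LCon[OF s] g] by blast
    show "\<exists>e>0. \<forall>h\<in>GL2. close e h g \<longrightarrow> eball a s h = eball a s g"
    proof (cases "cutb a s g")
      case False
      then show ?thesis using e2 by (auto simp: eball_def)
    next
      case True
      then have "g \<in> S1" using g by (simp add: cutb_def)
      then obtain e1 where e1: "e1 > 0" "\<forall>h\<in>GL2. close e1 h g \<longrightarrow> chiB h = chiB g"
        using LCon_D[OF chiB_LCon] by blast
      show ?thesis
      proof (intro exI[of _ "min e1 e2"] conjI ballI impI)
        fix h :: "'f^2^2" assume h: "h \<in> GL2" "close (min e1 e2) h g"
        then have "cutb a s h = cutb a s g" "chiB h = chiB g" using e1 e2 close_mono[of "min e1 e2" h g] by auto
        then show "eball a s h = eball a s g" using h g by (simp add: eball_def GL2_iff)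
      qed (use e1 e2 in simp)
    qed
  qed
  fix b g :: "'f^2^2" assume b: "b \<in> Borel" and g: "g \<in> GL2"
  have bg: "b ** g \<in> GL2" using GL2_mult[OF Borel_GL2[OF b] g] .
  show "eball a s (b ** g) = chi (b$1$1) (b$2$2) * eball a s g"
  proof (cases "cutb a s g")
    case True
    then have "g$2$1 \<noteq> 0" by (simp add: cutb_def)
    then show ?thesis using True cutb_borel[OF b, of a s g] chiB_borel[OF b g] bg g
      by (simp add: eball_def GL2_iff)
  next
    case False
    then show ?thesis using cutb_borel[OF b, of a s g] by (simp add: eball_def)
  qed
qed

lemma chiB_wu[simp]: "chiB (wu x) = 1" by (simp add: chiB_def wu_def)

lemma eball_wu[simp]: "eball a s (wu x) = (if v ((x - a) * s) \<le> 1 then 1 else 0)"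
  unfolding eball_def using wu_GL2[of x] by (simp add: GL2_iff del: vmult')
lemma eball_idm[simp]: "eball a s idm = 0" by (simp add: eball_def)
lemma ecut_wu[simp]: "ecut f a s (wu x) = (if v ((x - a) * s) \<le> 1 then f (wu x) else 0)"
  by (simp add: ecut_def del: vmult')
lemma ecut_idm[simp]: "ecut f a s idm = 0" by (simp add: ecut_def)

lemma rt_uu_wu: "right_translate (uu y) f (wu x) = f (wu (x + y))"
  by (simp add: right_translate_def wu_uu)
lemma rt_uu_idm: "f \<in> V \<Longrightarrow> right_translate (uu y) f idm = f idm"
  using ind_borel[of f "uu y"] by (simp add: right_translate_def idm_def uu_def mat_eq2 mult_ent Borel_iff)
lemma rt_dg_wu: "f \<in> V \<Longrightarrow> d \<noteq> 0 \<Longrightarrow> right_translate (dg 1 d) f (wu x) = chi d 1 * f (wu (x * d))"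
  unfolding right_translate_def wu_dg
  using indD(3)[of f "dg d 1" "wu (x * d)"] by (simp add: char_on_P_def dg_def Borel_iff)
lemma rt_dg_idm: "f \<in> V \<Longrightarrow> d \<noteq> 0 \<Longrightarrow> right_translate (dg 1 d) f idm = chi 1 d * f idm"
  using ind_borel[of f "dg 1 d"] by (simp add: right_translate_def idm_def dg_def mat_eq2 mult_ent Borel_iff)

lemma uu_GL2[simp]: "uu y \<in> GL2" using Borel_GL2 uu_Borel by blast
lemma dg_GL2[simp]: "d \<noteq> 0 \<Longrightarrow> dg 1 d \<in> GL2" using Borel_GL2 dg_Borel by (metis one_neq_zero)

lemma rt_uu_eball: "right_translate (uu y) (eball a s) = eball (a - y) s"
  if "s \<noteq> 0"
  by (rule ind_eqI) (use that in \<open>auto simp: rt_in eball_in rt_uu_wu rt_uu_idm algebra_simps simp del: vmult'\<close>)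

lemma rt_dg_eball: "right_translate (dg 1 d) (eball a s) = (\<lambda>x. chi d 1 * eball (a / d) (s * d) x)"
  if "s \<noteq> 0" "d \<noteq> 0"
proof (rule ind_eqI)
  show "right_translate (dg 1 d) (eball a s) \<in> V" using that by (simp add: rt_in eball_in)
  show "(\<lambda>x. chi d 1 * eball (a / d) (s * d) x) \<in> V" using that by (simp add: smult_in eball_in)
  show "right_translate (dg 1 d) (eball a s) idm = chi d 1 * eball (a / d) (s * d) idm"
    using that by (simp add: rt_dg_idm eball_in)
  fix x
  have eq: "(x * d - a) * s = (x - a / d) * (s * d)" using that by (simp add: field_simps)
  show "right_translate (dg 1 d) (eball a s) (wu x) = chi d 1 * eball (a / d) (s * d) (wu x)"
    by (simp only: rt_dg_wu[OF eball_in[OF that(1)] that(2)] eball_wu eq)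
qed

end


context LF begin

lemma sum_in: "finite A \<Longrightarrow> (\<And>r. r \<in> A \<Longrightarrow> F r \<in> V) \<Longrightarrow> (\<lambda>x. \<Sum>r\<in>A. F r x) \<in> V"
proof (induction A rule: finite_induct)
  case empty then show ?case using zero_in by (simp only: sum.empty)
next
  case (insert r A)
  have a: "(\<lambda>x. \<Sum>r\<in>A. F r x) \<in> V" using insert.IH insert.prems by blast
  have b: "F r \<in> V" using insert.prems by blast
  have "(\<lambda>x. \<Sum>r\<in>insert r A. F r x) = (\<lambda>x. F r x + (\<Sum>r\<in>A. F r x))"
    using insert.hyps by simp
  then show ?case using add_in[OF b a] by (simp only:)
qed

definition "Rr = (SOME R. finite R \<and> R \<subseteq> {x. v x \<le> 1} \<and> (\<forall>x. v x \<le> 1 \<longrightarrow> (\<exists>r\<in>R. v (x - r) < 1))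
   \<and> (\<forall>r\<in>R. \<forall>r'\<in>R. v (r - r') < 1 \<longrightarrow> r = r'))"

lemma Rr: "finite Rr" "Rr \<subseteq> {x. v x \<le> 1}" "\<forall>x. v x \<le> 1 \<longrightarrow> (\<exists>r\<in>Rr. v (x - r) < 1)"
   "\<forall>r\<in>Rr. \<forall>r'\<in>Rr. v (r - r') < 1 \<longrightarrow> r = r'"
  using someI_ex[OF reduced_resid] unfolding Rr_def[symmetric] by auto

lemma charp: "CHAR('k) = p" using ac unfolding alg_closure_of_Fp_def by simp

lemma Rr_card: "(of_nat (card Rr) :: 'k) = 0"
  using card_resid_dvd[OF Rr] charp by (simp add: of_nat_eq_0_iff_char_dvd)

lemma small_iff: "v (w / upi) \<le> 1 \<longleftrightarrow> v w < 1"
proof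
  assume "v (w / upi) \<le> 1"
  then have "v w \<le> rho" using upi_props(1) by (simp add: divide_le_eq)
  then show "v w < 1" using upi_props(2) by linarith
next
  assume "v w < 1"
  then have "v w \<le> rho" by (rule disc)
  then show "v (w / upi) \<le> 1" using upi_props(1) by (simp add: divide_le_eq)
qed

lemma ball_split_eq: "s \<noteq> 0 \<Longrightarrow> (x - (a + r / s)) * (s / upi) = ((x - a) * s - r) / upi"
  by (simp add: field_simps)

lemma BL1: assumes s: "s \<noteq> 0" and x: "v ((x - a) * s) \<le> 1"
  shows "\<exists>!r. r \<in> Rr \<and> v ((x - (a + r / s)) * (s / upi)) \<le> 1"
  unfolding ball_split_eq[OF s] small_iff
proof -
  obtain r where r: "r \<in> Rr" "v ((x - a) * s - r) < 1" using Rr(3) x by blast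
  show "\<exists>!r. r \<in> Rr \<and> v ((x - a) * s - r) < 1"
  proof (rule ex1I[of _ r])
    fix r' assume r': "r' \<in> Rr \<and> v ((x - a) * s - r') < 1"
    have "v (r' - r) \<le> max (v (r' - (x - a) * s)) (v ((x - a) * s - r))" by (rule vtri)
    moreover have "v (r' - (x - a) * s) < 1" using r' vsym by metis
    ultimately have "v (r' - r) < 1" using r by linarith
    then show "r' = r" using Rr(4) r r' by blast
  qed (use r in auto)
qed

lemma BL2: assumes s: "s \<noteq> 0" and x: "\<not> v ((x - a) * s) \<le> 1" and r: "r \<in> Rr"
  shows "\<not> v ((x - (a + r / s)) * (s / upi)) \<le> 1"
  unfolding ball_split_eq[OF s] small_iff
proof
  assume a: "v ((x - a) * s - r) < 1"
  have "v r \<le> 1" using Rr(2) r by auto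
  have "v ((x - a) * s) \<le> max (v ((x - a) * s - r)) (v r)" using vult[of "(x - a) * s - r" r] by simp
  then show False using a x \<open>v r \<le> 1\<close> by (simp del: vmult')
qed

lemma decomp_ecut: assumes s: "s \<noteq> 0"
  shows "ecut f a s = (\<lambda>g. \<Sum>r\<in>Rr. ecut f (a + r / s) (s / upi) g)"
proof
  fix g :: "'f^2^2"
  show "ecut f a s g = (\<Sum>r\<in>Rr. ecut f (a + r / s) (s / upi) g)"
  proof (cases "g$2$1 = 0")
    case True then show ?thesis by (simp add: ecut_def cutb_def)
  next
    case False
    define x where "x = g$2$2 / g$2$1"
    have ec: "ecut f b t g = (if v ((x - b) * t) \<le> 1 then f g else 0)" for b t
      unfolding ecut_def cutb_def x_def using False by simp
    show ?thesis
    proof (cases "v ((x - a) * s) \<le> 1")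
      case True
      from BL1[OF s True] obtain r0 where r0a: "r0 \<in> Rr \<and> v ((x - (a + r0 / s)) * (s / upi)) \<le> 1"
        and r0b: "\<forall>r. r \<in> Rr \<and> v ((x - (a + r / s)) * (s / upi)) \<le> 1 \<longrightarrow> r = r0"
        by (elim ex1E) blast
      have "ecut f (a + r / s) (s / upi) g = (if r = r0 then f g else 0)" if "r \<in> Rr" for r
      proof (cases "r = r0")
        case True then show ?thesis using r0a unfolding ec by simp
      next
        case False
        then have "\<not> v ((x - (a + r / s)) * (s / upi)) \<le> 1" using r0b that by blast
        then show ?thesis using False unfolding ec by simp
      qed
      then have "(\<Sum>r\<in>Rr. ecut f (a + r / s) (s / upi) g) = (\<Sum>r\<in>Rr. if r = r0 then f g else 0)"
        by (rule sum.cong[OF refl])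
      also have "\<dots> = f g" using Rr(1) r0a by simp
      finally show ?thesis using True unfolding ec by simp
    next
      case nb: False
      have "ecut f (a + r / s) (s / upi) g = 0" if "r \<in> Rr" for r
        using BL2[OF s nb that] unfolding ec by simp
      then have "(\<Sum>r\<in>Rr. ecut f (a + r / s) (s / upi) g) = (\<Sum>r\<in>Rr. 0)"
        by (rule sum.cong[OF refl])
      then show ?thesis using nb unfolding ec by simp
    qed
  qed
qed

lemma decomp_eball: assumes s: "s \<noteq> 0"
  shows "eball a s = (\<lambda>g. \<Sum>r\<in>Rr. eball (a + r / s) (s / upi) g)"
proof -
  have "eball a s = ecut (\<lambda>g. if det g \<noteq> 0 then chiB g else 0) a s" for a s
    by (auto simp: eball_def ecut_def)
  then show ?thesis using decomp_ecut[OF s] by simp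
qed

end

locale LFH = LF v p chi for v :: "'f::field \<Rightarrow> real" and p and chi :: "'f \<Rightarrow> 'f \<Rightarrow> 'k::field" +
  fixes \<phi> :: "('f^2^2 \<Rightarrow> 'k) \<Rightarrow> ('f^2^2 \<Rightarrow> 'k)"
  assumes hom: "\<phi> \<in> Hom_equiv Borel (Ind v chi)"
begin

lemma hom_in: "f \<in> V \<Longrightarrow> \<phi> f \<in> V" using hom unfolding Hom_equiv_def by blast
lemma hom_add: "f \<in> V \<Longrightarrow> f' \<in> V \<Longrightarrow> \<phi> (\<lambda>x. f x + f' x) = (\<lambda>x. \<phi> f x + \<phi> f' x)"
  using hom unfolding Hom_equiv_def by blast
lemma hom_smult: "f \<in> V \<Longrightarrow> \<phi> (\<lambda>x. c * f x) = (\<lambda>x. c * \<phi> f x)"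
  using hom unfolding Hom_equiv_def by blast
lemma hom_rt: "b \<in> Borel \<Longrightarrow> f \<in> V \<Longrightarrow> \<phi> (right_translate b f) = right_translate b (\<phi> f)"
  using hom unfolding Hom_equiv_def by blast
lemma hom_zero: "\<phi> (\<lambda>x. 0) = (\<lambda>x. 0)"
  using hom_smult[OF zero_in, of 0] by simp
lemma hom_diff: "f \<in> V \<Longrightarrow> f' \<in> V \<Longrightarrow> \<phi> (\<lambda>x. f x - f' x) = (\<lambda>x. \<phi> f x - \<phi> f' x)"
  using hom_add[of f "\<lambda>x. (-1) * f' x"] hom_smult[of f' "-1"] smult_in[of f' "-1"] by simp
lemma hom_sum: "finite A \<Longrightarrow> (\<And>r. r \<in> A \<Longrightarrow> F r \<in> V) \<Longrightarrow> \<phi> (\<lambda>x. \<Sum>r\<in>A. F r x) = (\<lambda>x. \<Sum>r\<in>A. \<phi> (F r) x)"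
proof (induction A rule: finite_induct)
  case empty then show ?case using hom_zero by simp
next
  case (insert r A)
  have sA: "(\<lambda>x. \<Sum>r\<in>A. F r x) \<in> V" using insert by (intro sum_in) auto
  have "\<phi> (\<lambda>x. \<Sum>r\<in>insert r A. F r x) = \<phi> (\<lambda>x. F r x + (\<Sum>r\<in>A. F r x))"
    using insert(1,2) by simp
  also have "\<dots> = (\<lambda>x. \<phi> (F r) x + \<phi> (\<lambda>x. \<Sum>r\<in>A. F r x) x)"
    using hom_add[of "F r" "\<lambda>x. \<Sum>r\<in>A. F r x"] sA insert(4) by simp
  also have "\<dots> = (\<lambda>x. \<Sum>r\<in>insert r A. \<phi> (F r) x)"
    using insert by simp
  finally show ?case .
qed

end


context LF begin

lemma large: assumes f: "f \<in> V"
  shows "\<exists>e>0. \<forall>x. x \<noteq> 0 \<and> v (1 / x) < e \<longrightarrow> f (wu x) = chi (- 1 / x) x * f idm"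
proof -
  obtain e where e: "e > 0" "\<forall>h\<in>GL2. (\<forall>i j. v (h $ i $ j - idm $ i $ j) < e) \<longrightarrow> f h = f idm"
    using ind_lc[OF f idm_GL2] by blast
  show ?thesis
  proof (intro exI[of _ e] conjI allI impI)
    fix x :: 'f assume x: "x \<noteq> 0 \<and> v (1 / x) < e"
    define L where "L = mk2 (- 1 / x) 1 0 x"
    define M where "M = mk2 1 0 (1 / x) (1::'f)"
    have "M \<in> GL2" unfolding M_def GL2_iff by simp
    moreover have "\<forall>i j. v (M $ i $ j - idm $ i $ j) < e"
      using x e(1) unfolding M_def idm_def forall_2[symmetric] by (auto simp: forall_2)
    ultimately have fM: "f M = f idm" using e(2) by blast
    have "L \<in> Borel" using x unfolding L_def Borel_iff by simp
    then have "f (L ** M) = chi (- 1 / x) x * f M"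
      using indD(3)[OF f, of L M] \<open>M \<in> GL2\<close> by (simp add: char_on_P_def L_def)
    moreover have "wu x = L ** M" unfolding L_def M_def using wu_lower x by blast
    ultimately show "f (wu x) = chi (- 1 / x) x * f idm" using fM by simp
  qed (use e in simp)
qed

lemma vpow[simp]: "v (x ^ n) = v x ^ n"
  by (induction n) (auto simp: vmult)

lemma big_x: "e > 0 \<Longrightarrow> \<exists>x::'f. x \<noteq> 0 \<and> v (1 / x) < e \<and> v x > 1"
proof -
  assume e: "e > 0"
  obtain n where n: "rho ^ n < min e 1" using rho_pow_small[of "min e 1"] e by auto
  define x where "x = inverse (upi ^ n)"
  have r: "rho ^ n > 0" using upi_props(1) by simp
  have "v (1 / x) = rho ^ n" unfolding x_def by (simp add: inverse_eq_divide)
  moreover have "v x = 1 / rho ^ n" unfolding x_def by (simp add: inverse_eq_divide)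
  moreover have "x \<noteq> 0" unfolding x_def by simp
  moreover have "1 / rho ^ n > 1" using n r by simp
  ultimately show ?thesis using n by (intro exI[of _ x]) auto
qed

end

context LFH begin

definition "e0 = eball 0 1"
definition "hh = \<phi> e0"
definition "c0 = hh (wu 0)"

lemma e0_in: "e0 \<in> V" unfolding e0_def by (simp add: eball_in)
lemma hh_in: "hh \<in> V" unfolding hh_def using hom_in e0_in by blast

lemma rt_smult: "right_translate b (\<lambda>x. c * f x) = (\<lambda>x. c * right_translate b f x)"
  by (simp add: right_translate_def)

lemma eball_unit: "v u = 1 \<Longrightarrow> eball a (s * u) = eball a s"
  unfolding eball_def cutb_def by (simp add: vmult mult.assoc[symmetric])

lemma hh_unit: assumes u: "v u = 1" shows "hh (wu (x * u)) = hh (wu x)"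
proof -
  have u0: "u \<noteq> 0" using u by auto
  have "right_translate (dg 1 u) e0 = (\<lambda>x. chi u 1 * e0 x)"
    unfolding e0_def using rt_dg_eball[of 1 u 0] u0 eball_unit[OF u, of 0 1] by simp
  then have "right_translate (dg 1 u) hh = (\<lambda>x. chi u 1 * hh x)"
    using hom_rt[of "dg 1 u" e0] hom_smult[of e0 "chi u 1"] e0_in u0 unfolding hh_def by simp
  then have "right_translate (dg 1 u) hh (wu x) = chi u 1 * hh (wu x)" by simp
  then have "chi u 1 * hh (wu (x * u)) = chi u 1 * hh (wu x)" using rt_dg_wu[OF hh_in u0] by simp
  then show ?thesis using chi_nz[OF u0] by simp
qed

lemma eball_shift: "v y \<le> 1 \<Longrightarrow> eball (a + y) 1 = eball a 1"
proof -
  assume y: "v y \<le> 1"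
  have "v (w - (a + y)) \<le> 1 \<longleftrightarrow> v (w - a) \<le> 1" for w
  proof
    assume "v (w - (a + y)) \<le> 1"
    then show "v (w - a) \<le> 1" using vult[of "w - (a + y)" y] y by (simp add: algebra_simps)
  next
    assume "v (w - a) \<le> 1"
    then show "v (w - (a + y)) \<le> 1" using vult[of "w - a" "- y"] y by (simp add: algebra_simps)
  qed
  then show ?thesis unfolding eball_def cutb_def by simp
qed

lemma hh_trans: assumes y: "v y \<le> 1" shows "hh (wu (x + y)) = hh (wu x)"
proof -
  have "right_translate (uu y) e0 = e0"
    unfolding e0_def using rt_uu_eball[of 1 y 0] eball_shift[of "- y" 0] y by simp
  then have "right_translate (uu y) hh = hh"
    using hom_rt[of "uu y" e0] e0_in unfolding hh_def by simp
  then show ?thesis using rt_uu_wu[of y hh x] by simp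
qed

lemma hh_shell: assumes z: "v z > 1 / rho" shows "hh (wu (z * upi)) = 0"
proof -
  have r0: "rho > 0" using upi_props(1) .
  have "1 / rho > 0" using r0 by simp
  have z0: "z \<noteq> 0"
  proof
    assume "z = 0"
    then have "v z = 0" by simp
    then show False using z \<open>1 / rho > 0\<close> by linarith
  qed
  have dec: "eball 0 upi = (\<lambda>g. \<Sum>r\<in>Rr. eball (r / upi) 1 g)"
    using decomp_eball[of upi 0] by simp
  have tr: "eball (r / upi) 1 = right_translate (uu (- (r / upi))) e0" for r
    unfolding e0_def using rt_uu_eball[of 1 "- (r / upi)" 0] by simp
  have dgm: "right_translate (dg 1 upi) e0 = (\<lambda>x. chi upi 1 * eball 0 upi x)"
    unfolding e0_def using rt_dg_eball[of 1 upi 0] by simp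
  have "right_translate (dg 1 upi) hh = \<phi> (\<lambda>x. chi upi 1 * eball 0 upi x)"
    using hom_rt[of "dg 1 upi" e0] e0_in dgm unfolding hh_def by simp
  also have "\<dots> = (\<lambda>x. chi upi 1 * \<phi> (eball 0 upi) x)"
    using hom_smult[of "eball 0 upi"] eball_in[of upi 0] by simp
  also have "\<phi> (eball 0 upi) = (\<lambda>x. \<Sum>r\<in>Rr. \<phi> (right_translate (uu (- (r / upi))) e0) x)"
    unfolding dec tr using hom_sum[OF Rr(1), of "\<lambda>r. right_translate (uu (- (r / upi))) e0"] rt_in e0_in
    by simp
  also have "\<dots> = (\<lambda>x. \<Sum>r\<in>Rr. right_translate (uu (- (r / upi))) hh x)"
    using hom_rt e0_in unfolding hh_def by simp
  finally have eq: "right_translate (dg 1 upi) hh (wu z) = chi upi 1 * (\<Sum>r\<in>Rr. right_translate (uu (- (r / upi))) hh (wu z))"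
    by simp
  have each: "right_translate (uu (- (r / upi))) hh (wu z) = hh (wu z)" if r: "r \<in> Rr" for r
  proof -
    define u where "u = 1 - r / (upi * z)"
    have vr: "v r \<le> 1" using Rr(2) r by auto
    have "rho * v z > 1" using z r0 by (simp add: divide_less_eq mult.commute)
    then have "v (r / (upi * z)) < 1" using vr r0 z0 by (simp add: divide_less_eq) 
    then have "v (- (r / (upi * z))) < v 1" by simp
    then have "v u = 1" unfolding u_def using vadd_less[of "- (r / (upi * z))" 1] by (simp add: algebra_simps)
    moreover have "z + - (r / upi) = z * u" unfolding u_def using z0 by (simp add: field_simps)
    ultimately show ?thesis using rt_uu_wu[of "- (r / upi)" hh z] hh_unit by simp
  qed
  have "(\<Sum>r\<in>Rr. right_translate (uu (- (r / upi))) hh (wu z)) = (\<Sum>r\<in>Rr. hh (wu z))"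
    using each by (rule sum.cong[OF refl])
  also have "\<dots> = of_nat (card Rr) * hh (wu z)" by simp
  also have "\<dots> = 0" using Rr_card by simp
  finally have "right_translate (dg 1 upi) hh (wu z) = 0" using eq by simp
  then show ?thesis using rt_dg_wu[OF hh_in upi_nz] chi_nz[OF upi_nz, of 1] by simp
qed

lemma hh_out: assumes x: "v x > 1" shows "hh (wu x) = 0"
proof -
  have r0: "rho > 0" "rho < 1" using upi_props(1,2) .
  have "v (x / upi) > 1 / rho" using x r0 by (simp add: divide_strict_right_mono)
  then show ?thesis using hh_shell[of "x / upi"] by simp
qed

lemma hh_idm: "hh idm = 0"
proof -
  obtain e where e: "e > 0" "\<forall>x. x \<noteq> 0 \<and> v (1 / x) < e \<longrightarrow> hh (wu x) = chi (- 1 / x) x * hh idm"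
    using large[OF hh_in] by blast
  obtain x where x: "x \<noteq> 0" "v (1 / x) < e" "v x > 1" using big_x[OF e(1)] by blast
  have "chi (- 1 / x) x * hh idm = 0" using e(2) x hh_out[OF x(3)] by simp
  moreover have "chi (- 1 / x) x \<noteq> 0" using x by (intro chi_nz) auto
  ultimately show ?thesis by simp
qed

lemma hh_eq: "hh = (\<lambda>g. c0 * e0 g)"
proof (rule ind_eqI)
  show "hh \<in> V" by (rule hh_in)
  show "(\<lambda>g. c0 * e0 g) \<in> V" using e0_in by (rule smult_in)
  show "hh idm = c0 * e0 idm" using hh_idm by (simp add: e0_def)
  fix x
  show "hh (wu x) = c0 * e0 (wu x)"
  proof (cases "v x \<le> 1")
    case True
    then show ?thesis using hh_trans[of x 0] unfolding c0_def e0_def by simp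
  next
    case False
    then show ?thesis using hh_out[of x] unfolding e0_def by simp
  qed
qed

lemma phi_e0: "\<phi> e0 = (\<lambda>g. c0 * e0 g)" using hh_eq unfolding hh_def .

lemma phi_eball: assumes s: "s \<noteq> 0" shows "\<phi> (eball a s) = (\<lambda>g. c0 * eball a s g)"
proof -
  have dgm: "right_translate (dg 1 s) e0 = (\<lambda>x. chi s 1 * eball 0 s x)"
    unfolding e0_def using rt_dg_eball[of 1 s 0] s by simp
  have "(\<lambda>x. chi s 1 * \<phi> (eball 0 s) x) = \<phi> (right_translate (dg 1 s) e0)"
    using dgm hom_smult[of "eball 0 s" "chi s 1"] eball_in[OF s] by simp
  also have "\<dots> = right_translate (dg 1 s) (\<lambda>g. c0 * e0 g)" using hom_rt[of "dg 1 s" e0] s e0_in phi_e0 by simp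
  also have "\<dots> = (\<lambda>x. chi s 1 * (c0 * eball 0 s x))" using dgm by (simp add: rt_smult algebra_simps)
  finally have "\<And>x. chi s 1 * \<phi> (eball 0 s) x = chi s 1 * (c0 * eball 0 s x)" by metis
  then have p0: "\<phi> (eball 0 s) = (\<lambda>x. c0 * eball 0 s x)" using chi_nz[OF s, of 1] by auto
  have "eball a s = right_translate (uu (- a)) (eball 0 s)" using rt_uu_eball[OF s, of "- a" 0] by simp
  then show ?thesis using hom_rt[of "uu (- a)" "eball 0 s"] eball_in[OF s] p0 by (simp add: rt_smult)
qed

end


context LF begin

lemma psi_LC: assumes f: "f \<in> V" shows "\<exists>e>0. \<forall>x. v (x - l) < e \<longrightarrow> f (wu x) = f (wu l)"
proof -
  obtain e where e: "e > 0" "\<forall>h\<in>GL2. (\<forall>i j. v (h $ i $ j - wu l $ i $ j) < e) \<longrightarrow> f h = f (wu l)"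
    using ind_lc[OF f wu_GL2] by blast
  show ?thesis
  proof (intro exI[of _ e] conjI allI impI)
    fix x assume x: "v (x - l) < e"
    have "\<forall>i j. v (wu x $ i $ j - wu l $ i $ j) < e"
      using x e(1) unfolding wu_def by (auto simp: forall_2[symmetric] forall_2)
    then show "f (wu x) = f (wu l)" using e(2) wu_GL2 by blast
  qed (use e in simp)
qed

lemma supp: assumes f: "f \<in> V" and f0: "f idm = 0"
  shows "\<exists>s. s \<noteq> 0 \<and> (\<forall>x. v (x * s) > 1 \<longrightarrow> f (wu x) = 0)"
proof -
  obtain e where e: "e > 0" "\<forall>x. x \<noteq> 0 \<and> v (1 / x) < e \<longrightarrow> f (wu x) = chi (- 1 / x) x * f idm"
    using large[OF f] by blast
  obtain n where n: "rho ^ n < e" using rho_pow_small e(1) by blast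
  show ?thesis
  proof (intro exI[of _ "upi ^ n"] conjI allI impI)
    show "upi ^ n \<noteq> 0" by simp
    fix x assume x: "v (x * upi ^ n) > 1"
    then have x0: "x \<noteq> 0" by auto
    have r: "rho ^ n > 0" using upi_props(1) by simp
    have "v x * rho ^ n > 1" using x by simp
    then have "1 / v x < rho ^ n" using x0 by (simp add: divide_less_eq mult.commute)
    then have "v (1 / x) < e" using n by simp
    then show "f (wu x) = 0" using e(2) x0 f0 by simp
  qed
qed

lemma chi_sym: assumes "\<And>z. z \<noteq> 0 \<Longrightarrow> chi (1 / z) z = 1" shows False
proof -
  have sw: "chi 1 z = chi z 1" if z: "z \<noteq> 0" for z
  proof -
    have "chi (1 / z) 1 * chi 1 z = 1" using chi_mult[of "1 / z" 1 1 z] assms[OF z] z by simp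
    moreover have "chi (1 / z) 1 * chi z 1 = 1" using chi_mult[of "1 / z" 1 z 1] z by simp
    moreover have "chi (1 / z) 1 \<noteq> 0" using chi_nz z by simp
    ultimately show ?thesis by (metis mult_left_cancel)
  qed
  have "char_eq_on_T chi (char_swap chi)"
    unfolding char_eq_on_T_def char_swap_def
  proof (intro allI impI)
    fix a d :: 'f assume ad: "a \<noteq> 0 \<and> d \<noteq> 0"
    have "chi a d = chi a 1 * chi 1 d" using chi_mult[of a 1 1 d] ad by simp
    also have "\<dots> = chi 1 a * chi d 1" using sw ad by simp
    also have "\<dots> = chi d a" using chi_mult[of d 1 1 a] ad by (simp add: mult.commute)
    finally show "chi a d = chi d a" .
  qed
  then show False using ns by simp
qed

end

context LFH begin

definition "good f a s \<longleftrightarrow> \<phi> (ecut f a s) = (\<lambda>g. c0 * ecut f a s g)"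

lemma const_good: assumes f: "f \<in> V" and s: "s \<noteq> 0" and k: "\<And>x. v ((x - a) * s) \<le> 1 \<Longrightarrow> f (wu x) = \<kappa>"
  shows "good f a s"
proof -
  have eq: "ecut f a s = (\<lambda>g. \<kappa> * eball a s g)"
  proof
    fix g :: "'f^2^2"
    show "ecut f a s g = \<kappa> * eball a s g"
    proof (cases "g \<in> GL2 \<and> cutb a s g")
      case True
      then have g21: "g$2$1 \<noteq> 0" and c: "v ((g$2$2/g$2$1 - a) * s) \<le> 1" by (auto simp: cutb_def simp del: vmult')
      have "f g = chiB g * f (wu (g$2$2/g$2$1))" using ind_big[OF f _ g21] True by (simp add: chiB_def)
      then show ?thesis using True k[OF c] by (simp add: ecut_def eball_def GL2_iff)
    next
      case False
      then show ?thesis using indD(1)[OF f, of g] by (auto simp: ecut_def eball_def GL2_iff)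
    qed
  qed
  show ?thesis unfolding good_def eq using hom_smult[OF eball_in[OF s]] phi_eball[OF s] by (simp add: algebra_simps)
qed

lemma split_good: assumes f: "f \<in> V" and s: "s \<noteq> 0" and g: "\<And>r. r \<in> Rr \<Longrightarrow> good f (a + r / s) (s / upi)"
  shows "good f a s"
proof -
  have s': "s / upi \<noteq> 0" using s by simp
  have "\<phi> (ecut f a s) = (\<lambda>x. \<Sum>r\<in>Rr. \<phi> (ecut f (a + r / s) (s / upi)) x)"
    unfolding decomp_ecut[OF s] by (rule hom_sum[OF Rr(1)]) (rule ecut_in[OF f s'])
  also have "\<dots> = (\<lambda>x. \<Sum>r\<in>Rr. c0 * ecut f (a + r / s) (s / upi) x)"
    using g unfolding good_def by simp
  also have "\<dots> = (\<lambda>x. c0 * ecut f a s x)"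
    unfolding decomp_ecut[OF s, of f a] by (simp add: sum_distrib_left)
  finally show ?thesis unfolding good_def .
qed

lemma f_ecut: assumes f: "f \<in> V" and f0: "f idm = 0" and s: "\<forall>x. v (x * s) > 1 \<longrightarrow> f (wu x) = 0"
  shows "f = ecut f 0 s"
proof
  fix g :: "'f^2^2"
  show "f g = ecut f 0 s g"
  proof (cases "g \<in> GL2")
    case False then show ?thesis using indD(1)[OF f False] by (simp add: ecut_def)
  next
    case True
    show ?thesis
    proof (cases "g$2$1 = 0")
      case z: True
      then have "g \<in> Borel" using True by (simp add: Borel_def GL2_def)
      then show ?thesis using ind_borel[OF f] f0 by (simp add: ecut_def)
    next
      case nz: False
      show ?thesis
      proof (cases "cutb 0 s g")
        case True then show ?thesis by (simp add: ecut_def)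
      next
        case False
        then have "v (g$2$2/g$2$1 * s) > 1" using nz by (simp add: cutb_def del: vmult')
        then show ?thesis using ind_big[OF f \<open>g \<in> GL2\<close> nz] s False by (simp add: ecut_def del: vmult')
      qed
    qed
  qed
qed

lemma phi_V0: assumes f: "f \<in> V" and f0: "f idm = 0" shows "\<phi> f = (\<lambda>g. c0 * f g)"
proof -
  obtain s0 where s0: "s0 \<noteq> 0" "\<forall>x. v (x * s0) > 1 \<longrightarrow> f (wu x) = 0" using supp[OF f f0] by blast
  have fe: "f = ecut f 0 s0" using f_ecut[OF f f0 s0(2)] .
  have r0: "rho > 0" "rho < 1" using upi_props(1,2) .
  have vs0: "v s0 > 0" using s0 by simp
  have "good f 0 s0"
  proof (rule ccontr)
    assume bad0: "\<not> good f 0 s0"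
    define P :: "nat \<Rightarrow> 'f \<times> 'f \<Rightarrow> bool" where "P n as \<longleftrightarrow> \<not> good f (fst as) (snd as) \<and> snd as \<noteq> 0 \<and> v (snd as) = v s0 / rho ^ n" for n as
    define Q :: "nat \<Rightarrow> 'f \<times> 'f \<Rightarrow> 'f \<times> 'f \<Rightarrow> bool" where "Q n as as' \<longleftrightarrow> v (fst as' - fst as) \<le> 1 / v (snd as)" for n as as'
    have "\<exists>F. \<forall>n. P n (F n) \<and> Q n (F n) (F (Suc n))"
    proof (rule dependent_nat_choice)
      show "\<exists>x. P 0 x" using bad0 s0 unfolding P_def by (intro exI[of _ "(0, s0)"]) simp
      fix as n assume Pn: "P n as"
      obtain a s where as: "as = (a, s)" by fastforce
      have bad: "\<not> good f a s" and s: "s \<noteq> 0" and vs: "v s = v s0 / rho ^ n" using Pn as unfolding P_def by auto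
      obtain r where r: "r \<in> Rr" "\<not> good f (a + r / s) (s / upi)" using split_good[OF f s] bad by blast
      have vr: "v r \<le> 1" using Rr(2) r(1) by auto
      show "\<exists>y. P (Suc n) y \<and> Q n as y"
      proof (intro exI[of _ "(a + r / s, s / upi)"] conjI)
        show "P (Suc n) (a + r / s, s / upi)" unfolding P_def using r(2) s vs by simp
        show "Q n as (a + r / s, s / upi)" unfolding Q_def as using vr s by (simp add: divide_right_mono)
      qed
    qed
    then obtain F where F: "\<And>n. P n (F n)" "\<And>n. Q n (F n) (F (Suc n))" by blast
    define A where "A n = fst (F n)" for n
    define S where "S n = snd (F n)" for n
    have badn: "\<not> good f (A n) (S n)" "S n \<noteq> 0" "v (S n) = v s0 / rho ^ n" for n
      using F(1)[of n] unfolding P_def A_def S_def by auto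
    have invS: "1 / v (S n) = rho ^ n / v s0" for n using badn(3)[of n] by simp
    have stepA: "v (A (Suc n) - A n) \<le> rho ^ n / v s0" for n
      using F(2)[of n] invS[of n] unfolding Q_def A_def S_def by simp
    have tele: "v (A m - A n) \<le> rho ^ n / v s0" if "n \<le> m" for m n
      using that
    proof (induction m rule: dec_induct)
      case base then show ?case using vs0 by simp
    next
      case (step m)
      have "rho ^ m \<le> rho ^ n" using step(1) r0 by (intro power_decreasing) auto
      then have "rho ^ m / v s0 \<le> rho ^ n / v s0" using vs0 by (simp add: divide_right_mono)
      then show ?case using vtri[of "A (Suc m)" "A n" "A m"] stepA[of m] step(3) by linarith
    qed
    have cauchy: "\<forall>e>0. \<exists>N. \<forall>m\<ge>N. \<forall>n\<ge>N. v (A m - A n) < e"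
    proof (intro allI impI)
      fix e :: real assume e: "e > 0"
      obtain N where N: "rho ^ N < e * v s0" using rho_pow_small[of "e * v s0"] e vs0 by auto
      have NN: "rho ^ N / v s0 < e" using N vs0 by (simp add: divide_less_eq)
      show "\<exists>N. \<forall>m\<ge>N. \<forall>n\<ge>N. v (A m - A n) < e"
      proof (intro exI[of _ N] allI impI)
        fix m n assume mn: "N \<le> m" "N \<le> n"
        have b: "rho ^ k / v s0 \<le> rho ^ N / v s0" if "N \<le> k" for k
          using that r0 vs0 by (intro divide_right_mono power_decreasing) auto
        show "v (A m - A n) < e"
        proof (cases "n \<le> m")
          case True then show ?thesis using tele[OF True] b[OF mn(2)] NN by linarith
        next
          case False then have mn': "m \<le> n" by simp
          show ?thesis using tele[OF mn'] b[OF mn(1)] NN vsym[of "A m" "A n"] by linarith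
        qed
      qed
    qed
    obtain l where l: "\<forall>e>0. \<exists>N. \<forall>n\<ge>N. v (A n - l) < e" using complete[OF cauchy] by blast
    have Al: "v (A n - l) \<le> rho ^ n / v s0" for n
    proof -
      have pos: "rho ^ n / v s0 > 0" using r0 vs0 by simp
      obtain N where N: "\<forall>k\<ge>N. v (A k - l) < rho ^ n / v s0" using l pos by blast
      define k where "k = max N n"
      have "v (A k - l) < rho ^ n / v s0" using N unfolding k_def by simp
      moreover have "v (A n - A k) \<le> rho ^ n / v s0" using tele[of n k] vsym unfolding k_def by (metis max.cobounded2)
      ultimately show ?thesis using vtri[of "A n" l "A k"] by linarith
    qed
    obtain e where e: "e > 0" "\<forall>x. v (x - l) < e \<longrightarrow> f (wu x) = f (wu l)" using psi_LC[OF f] by blast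
    obtain n where n: "rho ^ n < e * v s0" using rho_pow_small[of "e * v s0"] e vs0 by auto
    have nn: "rho ^ n / v s0 < e" using n vs0 by (simp add: divide_less_eq)
    have "good f (A n) (S n)"
    proof (rule const_good[OF f badn(2)])
      fix x assume x: "v ((x - A n) * S n) \<le> 1"
      have "v (x - A n) \<le> 1 / v (S n)" using x badn(2)[of n] by (simp add: le_divide_eq)
      then have "v (x - A n) \<le> rho ^ n / v s0" using invS by simp
      then have "v (x - l) < e" using vtri[of x l "A n"] Al[of n] nn by linarith
      then show "f (wu x) = f (wu l)" using e(2) by blast
    qed
    then show False using badn(1) by blast
  qed
  then show ?thesis using fe unfolding good_def by metis
qed

end


context LFH begin

lemma phi_scalar: assumes f: "f \<in> V" shows "\<phi> f = (\<lambda>g. c0 * f g)"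
proof (cases "\<exists>t0\<in>V. t0 idm \<noteq> 0")
  case False
  then show ?thesis using phi_V0[OF f] f by blast
next
  case True
  then obtain t0 where t0: "t0 \<in> V" "t0 idm \<noteq> 0" by blast
  define t where "t = (\<lambda>x. inverse (t0 idm) * t0 x)"
  have t: "t \<in> V" "t idm = 1" unfolding t_def using smult_in[OF t0(1)] t0(2) by auto
  have pt: "\<phi> t \<in> V" using hom_in[OF t(1)] .
  define D where "D = (\<lambda>x. \<phi> t x - c0 * t x)"
  have D: "D \<in> V" unfolding D_def using diff_in[OF pt smult_in[OF t(1)]] .
  have Dtr: "D (wu (x + y)) = D (wu x)" for x y
  proof -
    have Rt: "right_translate (uu y) t \<in> V" using rt_in[OF t(1)] by simp
    define w where "w = (\<lambda>x. right_translate (uu y) t x - t x)"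
    have w: "w \<in> V" "w idm = 0" unfolding w_def using diff_in[OF Rt t(1)] rt_uu_idm[OF t(1)] by auto
    have "\<phi> w = (\<lambda>x. \<phi> (right_translate (uu y) t) x - \<phi> t x)" unfolding w_def using hom_diff[OF Rt t(1)] .
    also have "\<dots> = (\<lambda>x. right_translate (uu y) (\<phi> t) x - \<phi> t x)" using hom_rt[OF uu_Borel t(1)] by simp
    finally have "(\<lambda>x. right_translate (uu y) (\<phi> t) x - \<phi> t x) = (\<lambda>g. c0 * w g)" using phi_V0[OF w] by simp
    then have "right_translate (uu y) (\<phi> t) (wu x) - \<phi> t (wu x) = c0 * w (wu x)" by metis
    then show ?thesis unfolding D_def w_def rt_uu_wu by (simp add: algebra_simps)
  qed
  obtain e where e: "e > 0" "\<forall>x. x \<noteq> 0 \<and> v (1 / x) < e \<longrightarrow> D (wu x) = chi (- 1 / x) x * D idm"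
    using large[OF D] by blast
  have Dc: "D (wu x) = D (wu 0)" for x using Dtr[of 0 x] by simp
  have Didm: "D idm = 0"
  proof (rule ccontr)
    assume nz: "D idm \<noteq> 0"
    have "chi (1 / z) z = 1" if z: "z \<noteq> 0" for z
    proof -
      have vz: "v z > 0" using z by simp
      obtain x where x: "x \<noteq> 0" "v (1 / x) < e * min 1 (v z)" "v x > 1"
        using big_x[of "e * min 1 (v z)"] e(1) vz by auto
      have m1: "e * min 1 (v z) \<le> e" using e(1) by (simp add: mult_left_le)
      have m2: "e * min 1 (v z) \<le> e * v z" using e(1) by (simp add: mult_left_mono)
      have x1: "v (1 / x) < e" using x(2) m1 by linarith
      have "v (1 / (x * z)) = v (1 / x) / v z" by simp
      also have "\<dots> < e"
      proof -
        have gen: "(a::real) < e * c \<Longrightarrow> c > 0 \<Longrightarrow> a / c < e" for a c by (simp add: pos_divide_less_eq)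
        have "v (1 / x) < e * v z" using x(2) m2 by linarith
        then show ?thesis using gen vz by blast
      qed
      finally have x2: "v (1 / (x * z)) < e" .
      have xz: "x * z \<noteq> 0" using x z by simp
      have "chi (- 1 / x) x * D idm = chi (- 1 / (x * z)) (x * z) * D idm"
        using e(2) x(1) x1 xz x2 Dc[of x] Dc[of "x * z"] by metis
      then have c1: "chi (- 1 / x) x = chi (- 1 / (x * z)) (x * z)" using nz by simp
      have "chi (- 1 / (x * z)) (x * z) = chi ((- 1 / x) * (1 / z)) (x * z)" by simp
      also have "\<dots> = chi (- 1 / x) x * chi (1 / z) z" using chi_mult[of "- 1 / x" x "1 / z" z] x z by simp
      finally have "chi (- 1 / x) x * 1 = chi (- 1 / x) x * chi (1 / z) z" using c1 by simp
      then show ?thesis using chi_nz[of "- 1 / x" x] x by (metis mult_left_cancel divide_eq_0_iff neg_equal_0_iff_equal one_neq_zero)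
    qed
    then show False using chi_sym by blast
  qed
  have "D = (\<lambda>x. 0)"
  proof (rule ind_eqI[OF D zero_in])
    show "D idm = 0" by (rule Didm)
    obtain x where x: "x \<noteq> 0" "v (1 / x) < e" "v x > 1" using big_x[OF e(1)] by blast
    have "D (wu 0) = 0" using Dc[of x] e(2) x Didm by simp
    then show "D (wu y) = 0" for y using Dc[of y] by simp
  qed
  then have phit: "\<phi> t = (\<lambda>x. c0 * t x)" unfolding D_def by (metis eq_iff_diff_eq_0)
  define g where "g = (\<lambda>x. f x - f idm * t x)"
  have g: "g \<in> V" "g idm = 0" unfolding g_def using diff_in[OF f smult_in[OF t(1)]] t(2) by auto
  have fe: "f = (\<lambda>x. f idm * t x + g x)" unfolding g_def by simp
  have "\<phi> f = (\<lambda>x. \<phi> (\<lambda>x. f idm * t x) x + \<phi> g x)"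
    by (subst fe) (rule hom_add[OF smult_in[OF t(1)] g(1)])
  also have "\<dots> = (\<lambda>x. f idm * (c0 * t x) + c0 * g x)"
    using hom_smult[OF t(1)] phit phi_V0[OF g] by simp
  also have "\<dots> = (\<lambda>x. c0 * f x)" unfolding g_def by (simp add: algebra_simps)
  finally show ?thesis .
qed

end

theorem corollary5p3:
  fixes v :: "'f::field \<Rightarrow> real" and p :: nat and chi :: "'f \<Rightarrow> 'f \<Rightarrow> 'k::field"
  assumes "nonarch_local_field v p"
    and "alg_closure_of_Fp TYPE('k) p"
    and "smooth_char v chi"
    and "\<not> char_eq_on_T chi (char_swap chi)"
  shows "Hom_equiv Borel (Ind v chi) = Hom_equiv GL2 (Ind v chi)"
proof -
  interpret LF v p chi using assms by unfold_locales
  show ?thesis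
  proof
    show "Hom_equiv GL2 V \<subseteq> Hom_equiv Borel V"
      unfolding Hom_equiv_def using Borel_GL2 by blast
    show "Hom_equiv Borel V \<subseteq> Hom_equiv GL2 V"
    proof
      fix \<phi> assume ph: "\<phi> \<in> Hom_equiv Borel V"
      interpret H: LFH v p chi \<phi> using assms ph by unfold_locales
      have "\<phi> (right_translate h f) = right_translate h (\<phi> f)" if h: "h \<in> GL2" and f: "f \<in> V" for h f
        using H.phi_scalar[OF f] H.phi_scalar[OF rt_in[OF f h]] by (simp add: right_translate_def)
      then show "\<phi> \<in> Hom_equiv GL2 V" using ph unfolding Hom_equiv_def by blast
    qed
  qed
qed


end
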